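(* Let $M_{2,2}$ be the lattice obtained from $A_1^{\oplus 12}=\langle v_1,\dots,v_{12}\rangle$ ($v_i^2=-2$, $v_i\cdot v_j=0$ for $i\ne j$) by adding the generators $(v_1+\dots+v_8)/2$ and $(v_5+\dots+v_{12})/2$, with discriminant group $A_{M_{2,2}}$ and discriminant form $q:A_{M_{2,2}}\to\mathbb Q/2\mathbb Z$. Consider the equivalence relation on $A_{M_{2,2}}$ where $r\sim s$ if $\bar\psi(r)=s$ for the isometry $\bar\psi$ of $A_{M_{2,2}}$ induced by some $\psi\in O(M_{2,2})$. Then the non-trivial equivalence classes, recorded as triples (order of the element, value of $q$, cardinality of the class), are exactly: $(2,0,54)$, $(2,0,1)$, $(2,1/2,64)$, $(2,1,54)$, $(2,1,18)$, $(2,3/2,64)$.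
   Context: For an even lattice $S$, $A_S=S^\vee/S$ and $q_S(x+S)=x^2\bmod 2\mathbb Z$. The lattice $M_{2,2}$ is the exceptional lattice of the symplectic action of $(\mathbb Z/2\mathbb Z)^2$ on a K3 surface (the minimal primitive sublattice of the second cohomology of the resolved quotient containing the 12 exceptional curves). *)

theory Defs
  imports "HOL-Analysis.Finite_Cartesian_Product" "HOL-Library.Multiset"
begin

text \<open>Vectors x :: rat^12 stand for the rational combination sum_i x$i v_i of the basis
  v_1..v_12 of A_1^12 (index i :: 12 ranges over 0..11, so v_k corresponds to index k-1).\<close>

definition bform :: "rat^12 \<Rightarrow> rat^12 \<Rightarrow> rat" where
  "bform x y = - 2 * (\<Sum>i\<in>UNIV. x $ i * y $ i)"

definition h1 :: "rat^12" where
  "h1 = (\<chi> i. if i < 8 then 1/2 else 0)"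

definition h2 :: "rat^12" where
  "h2 = (\<chi> i. if 4 \<le> i then 1/2 else 0)"

definition M22 :: "(rat^12) set" where
  "M22 = {(\<chi> i. of_int (a i)) + of_int m *s h1 + of_int n *s h2 | a m n. True}"

definition M22dual :: "(rat^12) set" where
  "M22dual = {y. \<forall>x\<in>M22. bform x y \<in> \<int>}"

definition coset :: "rat^12 \<Rightarrow> (rat^12) set" where
  "coset y = (\<lambda>m. y + m) ` M22"

definition Adisc :: "(rat^12) set set" where
  "Adisc = coset ` M22dual"

definition elem_ord :: "(rat^12) set \<Rightarrow> nat" where
  "elem_ord r = (LEAST n::nat. 0 < n \<and> (\<forall>y\<in>r. of_nat n *s y \<in> M22))"

text \<open>Value in Q/2Z, represented by its representative in [0,2).\<close>
definition mod2 :: "rat \<Rightarrow> rat" where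
  "mod2 t = t - 2 * of_int \<lfloor>t / 2\<rfloor>"

definition qdisc :: "(rat^12) set \<Rightarrow> rat" where
  "qdisc r = mod2 (bform (SOME y. y \<in> r) (SOME y. y \<in> r))"

definition OM22 :: "(rat^12^12) set" where
  "OM22 = {A. (\<lambda>x. A *v x) ` M22 = M22 \<and> (\<forall>x y. bform (A *v x) (A *v y) = bform x y)}"

definition disc_rel :: "(rat^12) set \<Rightarrow> (rat^12) set \<Rightarrow> bool" where
  "disc_rel r s = (\<exists>A\<in>OM22. \<exists>y\<in>r. s = coset (A *v y))"

definition disc_class :: "(rat^12) set \<Rightarrow> (rat^12) set set" where
  "disc_class r = {s \<in> Adisc. disc_rel r s}"

definition nontrivial_classes :: "(rat^12) set set set" where
  "nontrivial_classes = disc_class ` (Adisc - {coset 0})"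

definition class_triple :: "(rat^12) set set \<Rightarrow> nat \<times> rat \<times> nat" where
  "class_triple C = (elem_ord (SOME r. r \<in> C), qdisc (SOME r. r \<in> C), card C)"

end

theory Submission
  imports Defs
begin

lemma c12: "CARD(12) = 12" by simp

lemma U12: "(UNIV::12 set) = {0,1,2,3,4,5,6,7,8,9,10,11}"
proof -
  have "card {0,1,2,3,4,5,6,7,8,9,10,11::12} = 12" by simp
  then show ?thesis using card_subset_eq[OF finite_class.finite_UNIV subset_UNIV, of "{0,1,2,3,4,5,6,7,8,9,10,11::12}"] c12
    by simp
qed

lemma all12: "(\<forall>i::12. P i) \<longleftrightarrow> P 0 \<and> P 1 \<and> P 2 \<and> P 3 \<and> P 4 \<and> P 5 \<and> P 6 \<and> P 7 \<and> P 8 \<and> P 9 \<and> P 10 \<and> P 11"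
  by (metis U12 UNIV_I insert_iff empty_iff)

lemma ord12: "\<forall>i::12. (i < 8 \<longleftrightarrow> i \<in> {0,1,2,3,4,5,6,7}) \<and> (4 \<le> i \<longleftrightarrow> i \<in> {4,5,6,7,8,9,10,11})"
  unfolding all12 by (simp add: less_bit0_def less_eq_bit0_def bit0.Rep_numeral bit0.Rep_0 bit0.Rep_1)

definition L12 :: "12 list" where "L12 = [0,1,2,3,4,5,6,7,8,9,10,11]"
lemma L12_set: "set L12 = UNIV" by (simp add: L12_def U12)
lemma L12_dist: "distinct L12" by (simp add: L12_def)
lemma L12_len: "length L12 = 12" by (simp add: L12_def)

definition tl12 :: "(12 \<Rightarrow> 'a) \<Rightarrow> 'a list" where "tl12 w = map w L12"

lemma tl12_inj: "tl12 v = tl12 w \<longleftrightarrow> v = w"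
  unfolding tl12_def using L12_set by (metis map_eq_conv UNIV_I ext)

definition halfint :: "rat^12 \<Rightarrow> bool" where "halfint y \<longleftrightarrow> (\<forall>i. 2 * y$i \<in> \<int>)"
definition pat :: "rat^12 \<Rightarrow> 12 \<Rightarrow> bool" where "pat y = (\<lambda>i. y$i \<notin> \<int>)"
definition selC :: "bool \<Rightarrow> bool \<Rightarrow> 12 \<Rightarrow> bool" where "selC p q = (\<lambda>i. (p \<and> i < 8) \<noteq> (q \<and> 4 \<le> i))"
definition inC :: "(12 \<Rightarrow> bool) \<Rightarrow> bool" where "inC w \<longleftrightarrow> (\<exists>p q. w = selC p q)"
definition xorf :: "(12 \<Rightarrow> bool) \<Rightarrow> (12 \<Rightarrow> bool) \<Rightarrow> 12 \<Rightarrow> bool" where "xorf v w = (\<lambda>i. v i \<noteq> w i)"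

lemma hz: "(of_int s / 2 :: rat) \<in> \<int> \<longleftrightarrow> even s"
proof
  assume "of_int s / 2 \<in> (\<int>::rat set)"
  then obtain j where "(of_int s / 2 :: rat) = of_int j" by (auto elim: Ints_cases)
  then have "(of_int s :: rat) = of_int (2*j)" by simp
  then have "s = 2*j" by linarith
  then show "even s" by simp
next
  assume "even s" then obtain j where "s = 2*j" by auto
  then show "(of_int s / 2 :: rat) \<in> \<int>" by simp
qed

lemma hz2:
  assumes "2 * t \<in> \<int>"
  shows "(t :: rat) - of_int k / 2 \<in> \<int> \<longleftrightarrow> (t \<in> \<int> \<longleftrightarrow> even k)"
proof -
  obtain s where s: "2 * t = of_int s" using assms by (auto elim: Ints_cases)
  then have t: "t = of_int s / 2" by simp
  have eq: "t - of_int k / 2 = of_int (s - k) / 2" using t by (simp add: diff_divide_distrib)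
  have 1: "t - of_int k / 2 \<in> \<int> \<longleftrightarrow> even (s - k)" unfolding eq by (rule hz)
  have 2: "t \<in> \<int> \<longleftrightarrow> even s" unfolding t by (rule hz)
  show ?thesis unfolding 1 2 by auto
qed

lemma halfint_neg: "(- t :: rat) \<in> \<int> \<longleftrightarrow> t \<in> \<int>"
  by (metis Ints_minus minus_minus)

lemma h1_nth: "h1 $ i = (if i < 8 then 1/2 else 0)" by (simp add: h1_def)
lemma h2_nth: "h2 $ i = (if 4 \<le> i then 1/2 else 0)" by (simp add: h2_def)

lemma M22_mem: "x \<in> M22 \<longleftrightarrow> (\<exists>a m n. \<forall>i. x $ i = of_int (a i) + of_int m * h1 $ i + of_int n * h2 $ i)"
  unfolding M22_def by (auto simp: vec_eq_iff)

lemma M22_iff: "x \<in> M22 \<longleftrightarrow> halfint x \<and> inC (pat x)"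
proof
  assume "x \<in> M22"
  then obtain a m n where x: "\<And>i. x $ i = of_int (a i) + of_int m * h1 $ i + of_int n * h2 $ i"
    unfolding M22_mem by blast
  define k where "k i = m * (if i < 8 then 1 else 0) + n * (if 4 \<le> i then 1 else 0)" for i :: 12
  have xi: "x $ i = of_int (a i) + of_int (k i) / 2" for i
    using x[of i] by (simp add: k_def h1_nth h2_nth)
  have "2 * x $ i = of_int (2 * a i + k i)" for i using xi[of i] by simp
  then have hi: "halfint x" unfolding halfint_def by (metis Ints_of_int)
  have "x $ i \<in> \<int> \<longleftrightarrow> even (k i)" for i
  proof -
    have "x $ i - of_int (a i) = of_int (k i) / 2" using xi[of i] by simp
    then show ?thesis using hz[of "k i"] by (metis Ints_diff Ints_of_int diff_add_cancel xi add.commute Ints_add)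
  qed
  then have "pat x = selC (odd m) (odd n)"
    by (auto simp: pat_def selC_def k_def fun_eq_iff)
  then show "halfint x \<and> inC (pat x)" using hi by (auto simp: inC_def)
next
  assume "halfint x \<and> inC (pat x)"
  then obtain p q where hx: "halfint x" and pq: "pat x = selC p q" by (auto simp: inC_def)
  define m :: int where "m = (if p then 1 else 0)"
  define n :: int where "n = (if q then 1 else 0)"
  define k where "k i = m * (if i < 8 then 1 else 0) + n * (if 4 \<le> i then 1 else 0)" for i :: 12
  have "x $ i - of_int (k i) / 2 \<in> \<int>" for i
  proof -
    have "x $ i \<in> \<int> \<longleftrightarrow> \<not> selC p q i" using pq by (metis pat_def)
    then have "x $ i \<in> \<int> \<longleftrightarrow> even (k i)" by (auto simp: selC_def k_def m_def n_def)
    then show ?thesis using hz2[of "x$i" "k i"] hx by (simp add: halfint_def)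
  qed
  then have "\<forall>i. \<exists>j. x $ i - of_int (k i) / 2 = of_int j" by (metis Ints_cases)
  then obtain a where a: "\<And>i. x $ i - of_int (k i) / 2 = of_int (a i)" by metis
  have "\<forall>i. x $ i = of_int (a i) + of_int m * h1 $ i + of_int n * h2 $ i"
  proof
    fix i show "x $ i = of_int (a i) + of_int m * h1 $ i + of_int n * h2 $ i"
      using a[of i] by (simp add: h1_nth h2_nth k_def algebra_simps)
  qed
  then show "x \<in> M22" unfolding M22_mem by blast
qed

lemmas ord_simps = less_bit0_def less_eq_bit0_def bit0.Rep_numeral bit0.Rep_0 bit0.Rep_1

lemma card12: "card {i::12. P i} = length (filter P L12)"
  using distinct_length_filter[OF L12_dist, of P] L12_set by simp

lemma hadd:
  assumes "2 * a \<in> \<int>" "2 * b \<in> \<int>"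
  shows "(a + b :: rat) \<in> \<int> \<longleftrightarrow> (a \<in> \<int> \<longleftrightarrow> b \<in> \<int>)"
proof -
  obtain A where A: "2 * a = of_int A" using assms(1) by (auto elim: Ints_cases)
  obtain B where B: "2 * b = of_int B" using assms(2) by (auto elim: Ints_cases)
  have a: "a = of_int A / 2" using A by simp
  have b: "b = of_int B / 2" using B by simp
  have ab: "a + b = of_int (A + B) / 2" using a b by (simp add: add_divide_distrib)
  have 1: "a + b \<in> \<int> \<longleftrightarrow> even (A + B)" unfolding ab by (rule hz)
  have 2: "a \<in> \<int> \<longleftrightarrow> even A" unfolding a by (rule hz)
  have 3: "b \<in> \<int> \<longleftrightarrow> even B" unfolding b by (rule hz)
  show ?thesis unfolding 1 2 3 by auto
qed

lemma sumhalf: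
  assumes "finite S" "\<forall>i\<in>S. 2 * t i \<in> \<int>"
  shows "(\<Sum>i\<in>S. t i :: rat) \<in> \<int> \<longleftrightarrow> even (card {i\<in>S. t i \<notin> \<int>})"
  using assms
proof (induction S rule: finite_induct)
  case empty then show ?case by simp
next
  case (insert x F)
  have s2: "2 * (\<Sum>i\<in>F. t i) \<in> \<int>"
    using insert by (simp add: sum_distrib_left Ints_sum)
  have e: "{i \<in> insert x F. t i \<notin> \<int>} = (if t x \<notin> \<int> then insert x {i\<in>F. t i \<notin> \<int>} else {i\<in>F. t i \<notin> \<int>})"
    by auto
  have fin: "finite {i\<in>F. t i \<notin> \<int>}" using insert by simp
  have xn: "x \<notin> {i\<in>F. t i \<notin> \<int>}" using insert by simp
  have "(\<Sum>i\<in>insert x F. t i) = t x + (\<Sum>i\<in>F. t i)" using insert by simp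
  then show ?case using hadd[of "t x" "\<Sum>i\<in>F. t i"] s2 insert e fin xn
    by (auto simp: card_insert_disjoint)
qed

lemma sum_ind: "(\<Sum>i\<in>UNIV. (if P i then c else 0) * f i) = (c :: rat) * (\<Sum>i\<in>{i::12. P i}. f i)"
proof -
  have "(\<Sum>i\<in>UNIV. (if P i then c else 0) * f i) = (\<Sum>i\<in>UNIV. if P i then c * f i else 0)"
    by (rule sum.cong) auto
  also have "\<dots> = (\<Sum>i\<in>{i. P i}. c * f i)" using sum.inter_filter[of UNIV "\<lambda>i. c * f i" P] by simp
  finally show ?thesis by (simp add: sum_distrib_left)
qed

lemma bform_formula:
  assumes "\<forall>i. x $ i = of_int (a i) + of_int m * h1 $ i + of_int n * h2 $ i"
  shows "bform x y = - (\<Sum>i\<in>UNIV. of_int (a i) * (2 * y $ i)) - of_int m * (\<Sum>i\<in>{i. i < 8}. y $ i)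
     - of_int n * (\<Sum>i\<in>{i. 4 \<le> i}. y $ i)"
proof -
  have "(\<Sum>i\<in>UNIV. x $ i * y $ i) = (\<Sum>i\<in>UNIV. of_int (a i) * y $ i + of_int m * (h1 $ i * y $ i) + of_int n * (h2 $ i * y $ i))"
    using assms by (intro sum.cong) (auto simp: algebra_simps)
  also have "\<dots> = (\<Sum>i\<in>UNIV. of_int (a i) * y $ i) + of_int m * (\<Sum>i\<in>UNIV. h1 $ i * y $ i) + of_int n * (\<Sum>i\<in>UNIV. h2 $ i * y $ i)"
    by (simp add: sum.distrib sum_distrib_left)
  also have "(\<Sum>i\<in>UNIV. h1 $ i * y $ i) = 1/2 * (\<Sum>i\<in>{i. i < 8}. y $ i)"
    unfolding h1_nth by (rule sum_ind)
  also have "(\<Sum>i\<in>UNIV. h2 $ i * y $ i) = 1/2 * (\<Sum>i\<in>{i. 4 \<le> i}. y $ i)"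
    unfolding h2_nth by (rule sum_ind)
  finally have "(\<Sum>i\<in>UNIV. x $ i * y $ i) = (\<Sum>i\<in>UNIV. of_int (a i) * y $ i) + of_int m * (1/2 * (\<Sum>i\<in>{i. i < 8}. y $ i)) + of_int n * (1/2 * (\<Sum>i\<in>{i. 4 \<le> i}. y $ i))" .
  moreover have "(\<Sum>i\<in>UNIV. of_int (a i) * (2 * y $ i)) = 2 * (\<Sum>i\<in>UNIV. of_int (a i) * y $ i)"
    by (simp add: sum_distrib_left algebra_simps)
  ultimately show ?thesis unfolding bform_def by (simp add: algebra_simps)
qed

lemma M22_intro: "\<forall>i. x $ i = of_int (a i) + of_int m * h1 $ i + of_int n * h2 $ i \<Longrightarrow> x \<in> M22"
  unfolding M22_mem by blast

lemma dual_iff: "y \<in> M22dual \<longleftrightarrow> halfint y \<and> (\<Sum>i\<in>{i. i < 8}. y $ i) \<in> \<int> \<and> (\<Sum>i\<in>{i. 4 \<le> i}. y $ i) \<in> \<int>"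
proof
  assume y: "y \<in> M22dual"
  have "2 * y $ i \<in> \<int>" for i
  proof -
    have ax: "\<forall>j. (axis i 1 :: rat^12) $ j = of_int (if j = i then 1 else 0) + of_int 0 * h1 $ j + of_int 0 * h2 $ j"
      by (simp add: axis_def)
    have "axis i 1 \<in> M22" unfolding M22_mem
      apply (rule exI[where x="\<lambda>j. if j = i then 1 else 0"])
      apply (rule exI[where x=0])+
      using ax by simp
    then have "bform (axis i 1) y \<in> \<int>" using y by (simp add: M22dual_def)
    moreover have "bform (axis i 1) y = - (2 * y $ i)"
      using bform_formula[OF ax] by (simp add: of_int_eq_iff if_distrib[of "\<lambda>x. of_int x * _"] cong: if_cong)
    ultimately show ?thesis using halfint_neg by metis
  qed
  moreover have "(\<Sum>i\<in>{i. i < 8}. y $ i) \<in> \<int>"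
  proof -
    have hh: "\<forall>j. h1 $ j = of_int 0 + of_int 1 * h1 $ j + of_int 0 * h2 $ j" by simp
    then have "h1 \<in> M22" by (rule M22_intro)
    then have "bform h1 y \<in> \<int>" using y by (simp add: M22dual_def)
    moreover have "bform h1 y = - (\<Sum>i\<in>{i. i < 8}. y $ i)" using bform_formula[OF hh] by simp
    ultimately show ?thesis using halfint_neg by metis
  qed
  moreover have "(\<Sum>i\<in>{i. 4 \<le> i}. y $ i) \<in> \<int>"
  proof -
    have hh: "\<forall>j. h2 $ j = of_int 0 + of_int 0 * h1 $ j + of_int 1 * h2 $ j" by simp
    then have "h2 \<in> M22" by (rule M22_intro)
    then have "bform h2 y \<in> \<int>" using y by (simp add: M22dual_def)
    moreover have "bform h2 y = - (\<Sum>i\<in>{i. 4 \<le> i}. y $ i)" using bform_formula[OF hh] by simp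
    ultimately show ?thesis using halfint_neg by metis
  qed
  ultimately show "halfint y \<and> (\<Sum>i\<in>{i. i < 8}. y $ i) \<in> \<int> \<and> (\<Sum>i\<in>{i. 4 \<le> i}. y $ i) \<in> \<int>"
    by (simp add: halfint_def)
next
  assume h: "halfint y \<and> (\<Sum>i\<in>{i. i < 8}. y $ i) \<in> \<int> \<and> (\<Sum>i\<in>{i. 4 \<le> i}. y $ i) \<in> \<int>"
  show "y \<in> M22dual" unfolding M22dual_def
  proof (rule CollectI, rule ballI)
    fix x assume "x \<in> M22"
    then obtain a m n where x: "\<forall>i. x $ i = of_int (a i) + of_int m * h1 $ i + of_int n * h2 $ i"
      unfolding M22_mem by blast
    have "(\<Sum>i\<in>UNIV. of_int (a i) * (2 * y $ i)) \<in> \<int>"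
      using h unfolding halfint_def by (intro Ints_sum Ints_mult[OF Ints_of_int]) auto
    then show "bform x y \<in> \<int>" unfolding bform_formula[OF x] using h
      by (intro Ints_diff Ints_minus Ints_mult) auto
  qed
qed

lemma dual_iff2: "y \<in> M22dual \<longleftrightarrow> halfint y \<and> even (card {i. i < 8 \<and> pat y i}) \<and> even (card {i. 4 \<le> i \<and> pat y i})"
proof -
  have "halfint y \<Longrightarrow> (\<Sum>i\<in>{i. i < 8}. y $ i) \<in> \<int> \<longleftrightarrow> even (card {i. i < 8 \<and> pat y i})"
    using sumhalf[of "{i. i < 8}" "\<lambda>i. y $ i"] by (simp add: halfint_def pat_def)
  moreover have "halfint y \<Longrightarrow> (\<Sum>i\<in>{i. 4 \<le> i}. y $ i) \<in> \<int> \<longleftrightarrow> even (card {i. 4 \<le> i \<and> pat y i})"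
    using sumhalf[of "{i. 4 \<le> i}" "\<lambda>i. y $ i"] by (simp add: halfint_def pat_def)
  ultimately show ?thesis using dual_iff by blast
qed

lemma M22_zero: "0 \<in> M22" by (rule M22_intro[of _ "\<lambda>_. 0" 0 0]) simp

lemma M22_add: "x \<in> M22 \<Longrightarrow> z \<in> M22 \<Longrightarrow> x + z \<in> M22"
proof -
  assume "x \<in> M22" "z \<in> M22"
  then obtain a m n a' m' n' where "\<forall>i. x $ i = of_int (a i) + of_int m * h1 $ i + of_int n * h2 $ i"
    "\<forall>i. z $ i = of_int (a' i) + of_int m' * h1 $ i + of_int n' * h2 $ i" unfolding M22_mem by blast
  then have "\<forall>i. (x + z) $ i = of_int (a i + a' i) + of_int (m + m') * h1 $ i + of_int (n + n') * h2 $ i"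
    by (simp add: algebra_simps)
  then show ?thesis by (rule M22_intro)
qed

lemma M22_neg: "x \<in> M22 \<Longrightarrow> - x \<in> M22"
proof -
  assume "x \<in> M22"
  then obtain a m n where "\<forall>i. x $ i = of_int (a i) + of_int m * h1 $ i + of_int n * h2 $ i"
    unfolding M22_mem by blast
  then have "\<forall>i. (- x) $ i = of_int (- a i) + of_int (- m) * h1 $ i + of_int (- n) * h2 $ i"
    by (simp add: algebra_simps)
  then show ?thesis by (rule M22_intro)
qed

lemma M22_diff: "x \<in> M22 \<Longrightarrow> z \<in> M22 \<Longrightarrow> x - z \<in> M22"
  using M22_add[OF _ M22_neg] by (metis diff_conv_add_uminus)

lemma halfint_M22: "x \<in> M22 \<Longrightarrow> halfint x" using M22_iff by blast
lemma halfint_dual: "x \<in> M22dual \<Longrightarrow> halfint x" using dual_iff by blast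

lemma M22_sub_dual: "x \<in> M22 \<Longrightarrow> x \<in> M22dual"
proof -
  assume "x \<in> M22"
  then obtain p q where h: "halfint x" and pq: "pat x = selC p q" using M22_iff inC_def by blast
  have "even (card {i. i < 8 \<and> selC p q i}) \<and> even (card {i. 4 \<le> i \<and> selC p q i})"
    by (cases p; cases q) (simp_all add: card12 L12_def selC_def ord_simps)
  then show ?thesis using h pq dual_iff2 by simp
qed

lemma bform_add2: "bform x (y + z) = bform x y + bform x z"
  unfolding bform_def by (simp add: algebra_simps sum.distrib)

lemma dual_add: "y \<in> M22dual \<Longrightarrow> m \<in> M22 \<Longrightarrow> y + m \<in> M22dual"
  using M22_sub_dual unfolding M22dual_def by (auto simp: bform_add2 intro: Ints_add)

lemma halfint_diff: "halfint y \<Longrightarrow> halfint z \<Longrightarrow> halfint (y - z)"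
  unfolding halfint_def by (simp add: right_diff_distrib Ints_diff)

lemma halfint_add: "halfint y \<Longrightarrow> halfint z \<Longrightarrow> halfint (y + z)"
  unfolding halfint_def by (simp add: distrib_left Ints_add)

lemma pat_diff: "halfint y \<Longrightarrow> halfint z \<Longrightarrow> pat (y - z) = xorf (pat y) (pat z)"
proof -
  assume hy: "halfint y" and hz: "halfint z"
  show ?thesis unfolding fun_eq_iff
  proof
    fix i
    have 1: "2 * y $ i \<in> \<int>" using hy halfint_def by blast
    have 2: "2 * (- z $ i) \<in> \<int>" using hz halfint_def by (metis Ints_minus mult_minus_right)
    have "(y - z) $ i = y $ i + (- z $ i)" by simp
    then show "pat (y - z) i = xorf (pat y) (pat z) i"
      using hadd[OF 1 2] halfint_neg[of "z $ i"] by (auto simp: pat_def xorf_def)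
  qed
qed

lemma coset_mem: "w \<in> coset y \<longleftrightarrow> w - y \<in> M22"
proof -
  have "w \<in> coset y \<longleftrightarrow> (\<exists>m\<in>M22. w = y + m)" unfolding coset_def by auto
  also have "\<dots> \<longleftrightarrow> w - y \<in> M22"
  proof
    assume "\<exists>m\<in>M22. w = y + m" then show "w - y \<in> M22" by auto
  next
    assume "w - y \<in> M22" then show "\<exists>m\<in>M22. w = y + m" by (intro bexI[of _ "w - y"]) auto
  qed
  finally show ?thesis .
qed

lemma coset_eq: "coset y = coset z \<longleftrightarrow> y - z \<in> M22"
proof
  assume "coset y = coset z"
  moreover have "y \<in> coset y" using coset_mem M22_zero by simp
  ultimately show "y - z \<in> M22" using coset_mem by blast
next
  assume d: "y - z \<in> M22"
  show "coset y = coset z"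
  proof (rule set_eqI)
    fix w
    have "w - y = (w - z) - (y - z)" "w - z = (w - y) + (y - z)" by simp_all
    then show "w \<in> coset y \<longleftrightarrow> w \<in> coset z" unfolding coset_mem using d M22_diff M22_add by metis
  qed
qed

lemma coset_eq2: "halfint y \<Longrightarrow> halfint z \<Longrightarrow> coset y = coset z \<longleftrightarrow> inC (xorf (pat y) (pat z))"
  unfolding coset_eq M22_iff using halfint_diff pat_diff by metis

definition can :: "(12 \<Rightarrow> bool) \<Rightarrow> 12 \<Rightarrow> bool" where "can w = xorf w (selC (w 0) (w 0 \<noteq> w 4))"

lemma o04: "(0::12) < 8" "\<not> (4::12) \<le> 0" "(4::12) < 8" "(4::12) \<le> 4" by (simp_all add: ord_simps)

lemma can_eq: "can v = can w \<longleftrightarrow> inC (xorf v w)"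
proof
  assume "can v = can w"
  then have "xorf v w = xorf (selC (v 0) (v 0 \<noteq> v 4)) (selC (w 0) (w 0 \<noteq> w 4))"
    unfolding can_def xorf_def fun_eq_iff by metis
  also have "\<dots> = selC (v 0 \<noteq> w 0) ((v 0 \<noteq> v 4) \<noteq> (w 0 \<noteq> w 4))"
    unfolding xorf_def selC_def fun_eq_iff by auto
  finally show "inC (xorf v w)" unfolding inC_def by blast
next
  assume "inC (xorf v w)"
  then obtain p q where pq: "xorf v w = selC p q" unfolding inC_def by blast
  then have w: "w = xorf v (selC p q)" unfolding xorf_def fun_eq_iff by metis
  then have "w 0 = (v 0 \<noteq> p)" "w 4 = (v 4 \<noteq> (p \<noteq> q))"
    by (simp_all add: xorf_def selC_def o04)
  then show "can v = can w" unfolding can_def w unfolding xorf_def selC_def fun_eq_iff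
    by (auto simp: o04)
qed

lemma can_0: "can w 0 = False" "can w 4 = False"
  by (auto simp: can_def xorf_def selC_def o04)

definition key :: "(rat^12) set \<Rightarrow> bool list" where "key s = tl12 (can (pat (SOME y. y \<in> s)))"

lemma key_coset: "halfint y \<Longrightarrow> key (coset y) = tl12 (can (pat y))"
proof -
  assume hy: "halfint y"
  have "y \<in> coset y" using coset_mem M22_zero by simp
  then have z: "(SOME z. z \<in> coset y) \<in> coset y" by (rule someI)
  define z where "z = (SOME z. z \<in> coset y)"
  have zy: "z - y \<in> M22" using z coset_mem z_def by blast
  have hz: "halfint z" using halfint_add[OF hy halfint_M22[OF zy]] by simp
  have "coset z = coset y" using zy coset_eq by blast
  then have "inC (xorf (pat z) (pat y))" using coset_eq2 hz hy by blast
  then have "can (pat z) = can (pat y)" using can_eq by blast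
  then show ?thesis unfolding key_def z_def by simp
qed

lemma key_inj: "halfint y \<Longrightarrow> halfint z \<Longrightarrow> key (coset y) = key (coset z) \<Longrightarrow> coset y = coset z"
  using key_coset tl12_inj can_eq coset_eq2 by metis

definition F :: "nat \<Rightarrow> nat \<Rightarrow> nat \<Rightarrow> nat" where
  "F a b c = (if even a \<and> even b \<and> even c then
     (let j = (if a = 2 then 1 else 0) + (if b = 2 then 1 else 0) + (if c = 2 then 1 else 0) :: nat in
      if j = 0 then (if odd ((if a = 4 then 1 else 0) + (if b = 4 then 1 else 0) + (if c = 4 then 1 else 0) :: nat) then 1 else 0)
      else j + 1)
   else if odd a \<and> odd b \<and> odd c then (if (a + b + c) mod 4 = 3 then 5 else 6) else 7)"

lemma le4: "(a::nat) \<le> 4 \<longleftrightarrow> a = 0 \<or> a = 1 \<or> a = 2 \<or> a = 3 \<or> a = 4" by auto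

lemma F_sym: "F a b c = F b a c" "F a b c = F a c b"
  unfolding F_def Let_def by (auto simp: add.commute add.left_commute)

lemma F_comp: "a \<le> 4 \<Longrightarrow> b \<le> 4 \<Longrightarrow> c \<le> 4 \<Longrightarrow> F (4 - a) (4 - b) c = F a b c"
  unfolding le4 by (elim disjE) (simp_all add: F_def)

lemma F_mod4: "a \<le> 4 \<Longrightarrow> b \<le> 4 \<Longrightarrow> c \<le> 4 \<Longrightarrow> F a b c \<in> {1..6} \<Longrightarrow>
   (a + b + c) mod 4 = [0, 0, 2, 0, 2, 3, 1] ! F a b c"
  unfolding le4 by (elim disjE) (simp_all add: F_def)


lemma F_comp2: "a \<le> 4 \<Longrightarrow> b \<le> 4 \<Longrightarrow> c \<le> 4 \<Longrightarrow> F a (4 - b) (4 - c) = F a b c"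
  unfolding le4 by (elim disjE) (simp_all add: F_def)
lemma F_comp3: "a \<le> 4 \<Longrightarrow> b \<le> 4 \<Longrightarrow> c \<le> 4 \<Longrightarrow> F (4 - a) b (4 - c) = F a b c"
  unfolding le4 by (elim disjE) (simp_all add: F_def)

definition Bk :: "nat \<Rightarrow> 12 set" where
  "Bk b = (if b = 0 then {0,1,2,3} else if b = 1 then {4,5,6,7} else {8,9,10,11})"

lemma set12: "{i::12. P i} = set (filter P L12)" using L12_set by auto

lemma Bk_char: "i \<in> Bk 0 \<longleftrightarrow> i < 8 \<and> \<not> 4 \<le> i" "i \<in> Bk 1 \<longleftrightarrow> i < 8 \<and> 4 \<le> i"
  "i \<in> Bk 2 \<longleftrightarrow> \<not> i < 8 \<and> 4 \<le> i"
proof -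
  have "\<forall>i::12. (i \<in> Bk 0 \<longleftrightarrow> i < 8 \<and> \<not> 4 \<le> i) \<and> (i \<in> Bk 1 \<longleftrightarrow> i < 8 \<and> 4 \<le> i) \<and>
     (i \<in> Bk 2 \<longleftrightarrow> \<not> i < 8 \<and> 4 \<le> i)"
    unfolding all12 by (simp add: Bk_def ord_simps)
  then show "i \<in> Bk 0 \<longleftrightarrow> i < 8 \<and> \<not> 4 \<le> i" "i \<in> Bk 1 \<longleftrightarrow> i < 8 \<and> 4 \<le> i"
  "i \<in> Bk 2 \<longleftrightarrow> \<not> i < 8 \<and> 4 \<le> i" by blast+
qed

lemma Bk_char1: "i \<in> Bk (Suc 0) \<longleftrightarrow> i < 8 \<and> 4 \<le> i" using Bk_char(2) by simp

lemma lt8_or: "(i::12) < 8 \<or> 4 \<le> i"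
proof -
  have "\<forall>i::12. i < 8 \<or> 4 \<le> i" unfolding all12 by (simp add: ord_simps)
  then show ?thesis by blast
qed

lemma card_Bk: "b \<le> 2 \<Longrightarrow> card (Bk b) = 4"
  by (auto simp: Bk_def le_Suc_eq numeral_2_eq_2)

lemma fin12[simp]: "finite (A :: 12 set)" by simp

definition wt :: "nat \<Rightarrow> (12 \<Rightarrow> bool) \<Rightarrow> nat" where "wt b w = card {i \<in> Bk b. w i}"

lemma wt_le4: "b \<le> 2 \<Longrightarrow> wt b w \<le> 4"
  unfolding wt_def using card_Bk card_mono[of "Bk b" "{i \<in> Bk b. w i}"] by auto

lemma wt_xor: assumes "b \<le> 2" "\<forall>i\<in>Bk b. c i = t"
  shows "wt b (xorf w c) = (if t then 4 - wt b w else wt b w)"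
proof (cases t)
  case True
  then have "{i \<in> Bk b. xorf w c i} = Bk b - {i \<in> Bk b. w i}" using assms by (auto simp: xorf_def)
  then show ?thesis using True card_Bk[OF assms(1)] unfolding wt_def
    by (simp add: card_Diff_subset)
next
  case False
  then have "{i \<in> Bk b. xorf w c i} = {i \<in> Bk b. w i}" using assms by (auto simp: xorf_def)
  then show ?thesis using False unfolding wt_def by simp
qed

lemma wt_selC: "wt 0 (xorf w (selC p q)) = (if p then 4 - wt 0 w else wt 0 w)"
  "wt 1 (xorf w (selC p q)) = (if p \<noteq> q then 4 - wt 1 w else wt 1 w)"
  "wt 2 (xorf w (selC p q)) = (if q then 4 - wt 2 w else wt 2 w)"
  by (rule wt_xor; auto simp: selC_def Bk_char Bk_char1)+

definition Tw :: "(12 \<Rightarrow> bool) \<Rightarrow> nat" where "Tw w = F (wt 0 w) (wt 1 w) (wt 2 w)"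

lemma Tw_xor: "inC c \<Longrightarrow> Tw (xorf w c) = Tw w"
proof -
  assume "inC c"
  then obtain p q where c: "c = selC p q" unfolding inC_def by blast
  have l: "wt 0 w \<le> 4" "wt (Suc 0) w \<le> 4" "wt 2 w \<le> 4" using wt_le4 by auto
  show ?thesis unfolding Tw_def c wt_selC
    by (cases p; cases q) (simp_all add: F_comp F_comp2 F_comp3 l)
qed

lemma Tw_can: "Tw (can w) = Tw w" unfolding can_def by (rule Tw_xor) (auto simp: inC_def)

lemma wt_parity_xor: "inC c \<Longrightarrow> b \<le> 2 \<Longrightarrow> even (wt b (xorf w c)) = even (wt b w)"
proof -
  assume "inC c" "b \<le> 2"
  then obtain p q where c: "c = selC p q" unfolding inC_def by blast
  have l: "wt b w \<le> 4" using wt_le4 \<open>b \<le> 2\<close> by auto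
  have "b = 0 \<or> b = 1 \<or> b = 2" using \<open>b \<le> 2\<close> by auto
  moreover have "\<And>a::nat. a \<le> 4 \<Longrightarrow> even (4 - a) = even a" by presburger
  moreover have "wt (Suc 0) (xorf w (selC p q)) = (if p \<noteq> q then 4 - wt (Suc 0) w else wt (Suc 0) w)"
    using wt_selC(2) by simp
  ultimately show ?thesis unfolding c using l by (auto simp: wt_selC split: if_splits)
qed

lemma card_split: "card {i. w i} = wt 0 w + wt 1 w + wt 2 w"
proof -
  have u: "{i. w i} = {i \<in> Bk 0. w i} \<union> {i \<in> Bk 1. w i} \<union> {i \<in> Bk 2. w i}"
    using lt8_or by (auto simp: Bk_char Bk_char1)
  have d1: "{i \<in> Bk 0. w i} \<inter> {i \<in> Bk 1. w i} = {}" by (auto simp: Bk_char Bk_char1)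
  have d2: "({i \<in> Bk 0. w i} \<union> {i \<in> Bk 1. w i}) \<inter> {i \<in> Bk 2. w i} = {}" by (auto simp: Bk_char Bk_char1)
  show ?thesis unfolding u wt_def
    by (subst card_Un_disjoint[OF _ _ d2], simp, simp, subst card_Un_disjoint[OF _ _ d1], simp_all)
qed

lemma dual_iff3: "y \<in> M22dual \<longleftrightarrow> halfint y \<and> even (wt 0 (pat y) + wt 1 (pat y)) \<and> even (wt 1 (pat y) + wt 2 (pat y))"
proof -
  have a: "card {i. i < 8 \<and> w i} = wt 0 w + wt 1 w" for w
  proof -
    have u: "{i. i < 8 \<and> w i} = {i \<in> Bk 0. w i} \<union> {i \<in> Bk 1. w i}" by (auto simp: Bk_char Bk_char1)
    have d: "{i \<in> Bk 0. w i} \<inter> {i \<in> Bk 1. w i} = {}" by (auto simp: Bk_char Bk_char1)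
    show ?thesis unfolding u wt_def by (subst card_Un_disjoint[OF _ _ d], simp_all)
  qed
  have b: "card {i. 4 \<le> i \<and> w i} = wt 1 w + wt 2 w" for w
  proof -
    have u: "{i. 4 \<le> i \<and> w i} = {i \<in> Bk 1. w i} \<union> {i \<in> Bk 2. w i}" using lt8_or by (auto simp: Bk_char Bk_char1)
    have d: "{i \<in> Bk 1. w i} \<inter> {i \<in> Bk 2. w i} = {}" by (auto simp: Bk_char Bk_char1)
    show ?thesis unfolding u wt_def by (subst card_Un_disjoint[OF _ _ d], simp_all)
  qed
  show ?thesis unfolding dual_iff2 a b ..
qed

definition cnt :: "bool list \<Rightarrow> nat" where "cnt xs = length (filter id xs)"
definition bw :: "nat \<Rightarrow> bool list \<Rightarrow> nat" where "bw b k = cnt (take 4 (drop (4*b) k))"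
definition Tl :: "bool list \<Rightarrow> nat" where "Tl k = F (bw 0 k) (bw 1 k) (bw 2 k)"
definition c8L :: "bool list" where "c8L = [True,True,True,True,True,True,True,True,False,False,False,False]"
definition c4L :: "bool list" where "c4L = [False,False,False,False,True,True,True,True,True,True,True,True]"
definition selCL :: "bool \<Rightarrow> bool \<Rightarrow> bool list" where "selCL p q = map2 (\<lambda>a b. (p \<and> a) \<noteq> (q \<and> b)) c8L c4L"
definition xorl :: "bool list \<Rightarrow> bool list \<Rightarrow> bool list" where "xorl a b = map2 (\<noteq>) a b"
definition keyL :: "bool list \<Rightarrow> bool list" where "keyL k = xorl k (selCL (k!0) (k!0 \<noteq> k!4))"
definition permL :: "nat list \<Rightarrow> bool list \<Rightarrow> bool list" where "permL g k = map (\<lambda>i. k ! i) g"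
definition rk :: "bool list \<Rightarrow> nat" where "rk k = foldl (\<lambda>a b. 2 * a + (if b then 1 else 0)) 0 k"

lemma tl12_selC: "tl12 (selC p q) = selCL p q"
  by (simp add: tl12_def L12_def selC_def selCL_def c8L_def c4L_def ord_simps)

lemma tl12_xorf: "tl12 (xorf v w) = xorl (tl12 v) (tl12 w)"
  by (simp add: tl12_def xorl_def xorf_def zip_map1 zip_map2 map_zip_map2 zip_same_conv_map o_def)

lemma tl12_nth: "n < 12 \<Longrightarrow> tl12 w ! n = w (L12 ! n)" by (simp add: tl12_def L12_len)
lemma tl12_len[simp]: "length (tl12 w) = 12" by (simp add: tl12_def L12_len)

lemma tl12_0: "tl12 w ! 0 = w 0" "tl12 w ! 4 = w 4" by (simp_all add: tl12_def L12_def)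

lemma keyL_tl: "keyL (tl12 w) = tl12 (can w)"
proof -
  have "keyL (tl12 w) = xorl (tl12 w) (tl12 (selC (w 0) (w 0 \<noteq> w 4)))"
    unfolding keyL_def tl12_0 tl12_selC ..
  also have "\<dots> = tl12 (can w)" unfolding can_def tl12_xorf ..
  finally show ?thesis .
qed

lemma cnt_map: "distinct xs \<Longrightarrow> cnt (map w xs) = card {i \<in> set xs. w i}"
  unfolding cnt_def by (simp add: filter_map o_def distinct_length_filter Int_def conj_commute)

lemma bw_tl: "bw 0 (tl12 w) = wt 0 w" "bw 1 (tl12 w) = wt 1 w" "bw 2 (tl12 w) = wt 2 w"
proof -
  have "bw 0 (tl12 w) = cnt (map w [0,1,2,3])" by (simp add: bw_def tl12_def L12_def)
  also have "\<dots> = wt 0 w" by (subst cnt_map) (simp_all add: wt_def Bk_def)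
  finally show "bw 0 (tl12 w) = wt 0 w" .
  have "bw 1 (tl12 w) = cnt (map w [4,5,6,7])" by (simp add: bw_def tl12_def L12_def)
  also have "\<dots> = wt 1 w" by (subst cnt_map) (simp_all add: wt_def Bk_def)
  finally show "bw 1 (tl12 w) = wt 1 w" .
  have "bw 2 (tl12 w) = cnt (map w [8,9,10,11])" by (simp add: bw_def tl12_def L12_def)
  also have "\<dots> = wt 2 w" by (subst cnt_map) (simp_all add: wt_def Bk_def)
  finally show "bw 2 (tl12 w) = wt 2 w" .
qed

lemma Tl_tl: "Tl (tl12 w) = Tw w" unfolding Tl_def Tw_def bw_tl ..

definition jx :: "12 \<Rightarrow> nat" where "jx i = (THE n. n < 12 \<and> L12 ! n = i)"

lemma jx: "jx i < 12 \<and> L12 ! jx i = i"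
proof -
  have "i \<in> set L12" using L12_set by simp
  then have "\<exists>!n. n < length L12 \<and> L12 ! n = i" by (rule distinct_Ex1[OF L12_dist])
  then show ?thesis unfolding jx_def L12_len by (rule theI')
qed

lemma jx_L12: "n < 12 \<Longrightarrow> jx (L12 ! n) = n"
  using jx[of "L12 ! n"] L12_dist L12_len nth_eq_iff_index_eq by metis

definition gperm :: "nat list \<Rightarrow> 12 \<Rightarrow> 12" where "gperm g i = L12 ! (g ! jx i)"

lemma tl12_gperm: "length g = 12 \<Longrightarrow> set g \<subseteq> {..<12} \<Longrightarrow> tl12 (w \<circ> gperm g) = permL g (tl12 w)"
proof (rule nth_equalityI)
  assume lg: "length g = 12" and sg: "set g \<subseteq> {..<12}"
  show "length (tl12 (w \<circ> gperm g)) = length (permL g (tl12 w))" using lg by (simp add: permL_def)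
  fix n assume "n < length (tl12 (w \<circ> gperm g))"
  then have n: "n < 12" by simp
  have "g ! n \<in> set g" using n lg by simp
  then have gn: "g ! n < 12" using sg by auto
  show "tl12 (w \<circ> gperm g) ! n = permL g (tl12 w) ! n"
    using n gn lg by (simp add: tl12_nth gperm_def jx_L12 permL_def)
qed

definition vk :: "bool list \<Rightarrow> rat^12" where "vk k = (\<chi> i. if k ! jx i then 1/2 else 0)"

lemma vk_halfint: "halfint (vk k)" by (simp add: halfint_def vk_def)

lemma vk_pat: "length k = 12 \<Longrightarrow> tl12 (pat (vk k)) = k"
proof (rule nth_equalityI)
  assume "length k = 12"
  then show "length (tl12 (pat (vk k))) = length k" by simp
  have h: "(1/2 :: rat) \<notin> \<int>" using hz[of 1] by simp
  fix n assume "n < length (tl12 (pat (vk k)))"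
  then have n: "n < 12" by simp
  show "tl12 (pat (vk k)) ! n = k ! n" using n h by (simp add: tl12_nth pat_def vk_def jx_L12)
qed

definition n3 :: "bool list list" where "n3 = [[False,False,False],[False,False,True],[False,True,False],[False,True,True],[True,False,False],[True,False,True],[True,True,False],[True,True,True]]"

definition n4 :: "bool list list" where "n4 = [[False,False,False,False],[False,False,False,True],[False,False,True,False],[False,False,True,True],[False,True,False,False],[False,True,False,True],[False,True,True,False],[False,True,True,True],[True,False,False,False],[True,False,False,True],[True,False,True,False],[True,False,True,True],[True,True,False,False],[True,True,False,True],[True,True,True,False],[True,True,True,True]]"

definition gensL :: "nat list list" where "gensL = [[1,0,2,3,4,5,6,7,8,9,10,11],[0,2,1,3,4,5,6,7,8,9,10,11],[0,1,3,2,4,5,6,7,8,9,10,11],[0,1,2,3,5,4,6,7,8,9,10,11],[0,1,2,3,4,6,5,7,8,9,10,11],[0,1,2,3,4,5,7,6,8,9,10,11],[0,1,2,3,4,5,6,7,9,8,10,11],[0,1,2,3,4,5,6,7,8,10,9,11],[0,1,2,3,4,5,6,7,8,9,11,10],[4,5,6,7,0,1,2,3,8,9,10,11],[0,1,2,3,8,9,10,11,4,5,6,7]]"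

definition nfs :: "bool list list" where "nfs = [[False,False,False,False,False,False,False,False,False,False,False,False],[False,False,False,False,False,False,False,False,True,True,True,True],[False,False,False,False,False,False,False,False,False,False,True,True],[False,False,False,False,False,False,True,True,False,False,True,True],[False,False,True,True,False,False,True,True,False,False,True,True],[False,False,False,True,False,False,False,True,False,False,False,True],[False,False,False,True,False,False,False,True,False,True,True,True]]"

definition witL :: "nat list" where "witL = [0,0,7,8,6,6,7,0,10,0,7,8,6,6,7,10,4,4,4,4,4,4,4,4,3,3,3,3,3,3,3,3,0,8,7,0,6,6,7,8,5,5,5,5,5,5,5,5,4,4,4,4,4,4,4,4,3,3,3,3,3,3,3,3,2,2,2,2,2,2,2,2,2,2,2,2,2,2,2,2,2,2,2,2,2,2,2,2,2,2,2,2,2,2,2,2,9,9,7,8,6,6,7,9,10,0,7,8,6,6,7,10,4,4,4,4,4,4,4,4,3,3,3,3,3,3,3,3,1,1,1,1,1,1,1,1,1,1,1,1,1,1,1,1,1,1,1,1,1,1,1,1,1,1,1,1,1,1,1,1,1,1,1,1,1,1,1,1,1,1,1,1,1,1,1,1,1,1,1,1,1,1,1,1,1,1,1,1,1,1,1,1,0,0,0,0,0,0,0,0,0,0,0,0,0,0,0,0,0,0,0,0,0,0,0,0,0,0,0,0,0,0,0,0,0,0,0,0,0,0,0,0,0,0,0,0,0,0,0,0,0,0,0,0,0,0,0,0,0,0,0,0,0,0,0,0]"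

definition keys3 :: "bool list list" where
  "keys3 = concat (map (\<lambda>a. concat (map (\<lambda>b. map (\<lambda>c. False # a @ False # b @ c)
      (filter (\<lambda>c. even (cnt c) = even (cnt a)) n4)) (filter (\<lambda>b. even (cnt b) = even (cnt a)) n3))) n3)"

fun lexl :: "bool list \<Rightarrow> bool list \<Rightarrow> bool" where
  "lexl (a # as) (b # bs) = ((\<not> a \<and> b) \<or> (a = b \<and> lexl as bs))" | "lexl _ _ = False"
fun incr :: "bool list list \<Rightarrow> bool" where
  "incr (x # y # zs) = (lexl x y \<and> incr (y # zs))" | "incr _ = True"
definition cwL :: "bool list list" where "cwL = [selCL False False, selCL True False, selCL False True, selCL True True]"

lemma C1: "incr keys3" by code_simp

lemma C2: "list_all (\<lambda>k. keyL k = k \<and> even (bw 0 k + bw 1 k) \<and> even (bw 1 k + bw 2 k) \<and> Tl k < 7) keys3" by code_simp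

lemma C3: "map (\<lambda>t. length (filter (\<lambda>k. Tl k = t) keys3)) [0..<7] = [1,1,18,54,54,64,64]" by code_simp

lemma C4: "list_all2 (\<lambda>k i. k \<in> set nfs \<or> lexl (keyL (permL (gensL ! i) k)) k) keys3 witL" by code_simp

lemma C5: "map Tl nfs = [0..<7] \<and> list_all (\<lambda>k. length k = 12 \<and> keyL k = k \<and> even (bw 0 k + bw 1 k) \<and> even (bw 1 k + bw 2 k)) nfs" by code_simp

lemma C6: "list_all (\<lambda>g. length g = 12 \<and> list_all (\<lambda>i. i < 12) g \<and> map (\<lambda>i. g ! (g ! i)) [0..<12] = [0..<12] \<and>
   list_all (\<lambda>c. permL g c \<in> set cwL) cwL) gensL" by code_simp

definition maps :: "rat^12^12 \<Rightarrow> (rat^12) set \<Rightarrow> (rat^12) set \<Rightarrow> bool" where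
  "maps A a b \<longleftrightarrow> (\<forall>y\<in>a. coset (A *v y) = b)"

lemma OM22_M: "A \<in> OM22 \<Longrightarrow> x \<in> M22 \<Longrightarrow> A *v x \<in> M22" unfolding OM22_def by blast
lemma OM22_form: "A \<in> OM22 \<Longrightarrow> bform (A *v x) (A *v y) = bform x y" unfolding OM22_def by blast
lemma OM22_onto: "A \<in> OM22 \<Longrightarrow> x \<in> M22 \<Longrightarrow> \<exists>z\<in>M22. x = A *v z" unfolding OM22_def by blast

lemma OM22_mult: "A \<in> OM22 \<Longrightarrow> B \<in> OM22 \<Longrightarrow> B ** A \<in> OM22"
proof -
  assume A: "A \<in> OM22" and B: "B \<in> OM22"
  have "(\<lambda>x. (B ** A) *v x) ` M22 = (\<lambda>x. B *v x) ` ((\<lambda>x. A *v x) ` M22)"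
    by (simp add: image_image matrix_vector_mul_assoc)
  also have "\<dots> = M22" using A B unfolding OM22_def by simp
  finally show ?thesis using A B unfolding OM22_def by (simp add: matrix_vector_mul_assoc[symmetric])
qed

lemma OM22_id: "mat 1 \<in> OM22" unfolding OM22_def by simp

lemma OM22_coset: "A \<in> OM22 \<Longrightarrow> z \<in> coset y \<Longrightarrow> coset (A *v z) = coset (A *v y)"
  unfolding coset_mem coset_eq by (metis OM22_M matrix_vector_mult_diff_distrib)

lemma maps_coset: "A \<in> OM22 \<Longrightarrow> maps A (coset y) (coset (A *v y))"
  unfolding maps_def using OM22_coset by blast

lemma self_coset: "y \<in> coset y" using coset_mem M22_zero by simp

lemma maps_comp: "maps A a b \<Longrightarrow> maps B b c \<Longrightarrow> maps (B ** A) a c"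
  unfolding maps_def by (metis self_coset matrix_vector_mul_assoc)

lemma OM22_dual: "A \<in> OM22 \<Longrightarrow> y \<in> M22dual \<Longrightarrow> A *v y \<in> M22dual"
  unfolding M22dual_def using OM22_onto OM22_form by fastforce

definition Pm :: "nat list \<Rightarrow> rat^12^12" where "Pm g = (\<chi> i j. if j = gperm g i then 1 else 0)"

lemma Pm_apply: "(Pm g *v y) $ i = y $ gperm g i"
proof -
  have "(Pm g *v y) $ i = (\<Sum>j\<in>UNIV. (if j = gperm g i then 1 else 0) * y $ j)"
    unfolding Pm_def matrix_vector_mult_def by simp
  also have "\<dots> = (\<Sum>j\<in>UNIV. if j = gperm g i then y $ j else 0)" by (intro sum.cong) auto
  also have "\<dots> = y $ gperm g i" by (simp add: sum.delta)
  finally show ?thesis .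
qed


lemma int_sq: "(t::rat) \<in> \<int> \<Longrightarrow> t \<noteq> 0 \<Longrightarrow> 1 \<le> t * t"
proof -
  assume "t \<in> \<int>" "t \<noteq> 0"
  then obtain n where n: "t = of_int n" "n \<noteq> 0" by (auto elim: Ints_cases)
  then have "1 \<le> n * n" by (metis abs_ge_zero abs_mult_self_eq dual_order.trans mult_le_cancel_left1 not_le zero_less_abs_iff int_one_le_iff_zero_less abs_le_square_iff)
  then have "(1::rat) \<le> of_int (n * n)" by linarith
  then show ?thesis using n by simp
qed

lemma half_sq: "2 * (t::rat) \<in> \<int> \<Longrightarrow> t \<notin> \<int> \<Longrightarrow> 1/4 \<le> t * t"
proof -
  assume a: "2 * t \<in> \<int>" "t \<notin> \<int>"
  then have "2 * t \<noteq> 0" by auto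
  then have "1 \<le> (2 * t) * (2 * t)" using int_sq a by blast
  then show ?thesis by (simp add: algebra_simps)
qed

lemma card_selC: "(p, q) \<noteq> (False, False) \<Longrightarrow> card {k. selC p q k} = 8"
  by (cases p; cases q) (simp_all add: card12 L12_def selC_def ord_simps)

lemma sum_single: "(\<forall>j. j \<noteq> k \<longrightarrow> f j = 0) \<Longrightarrow> (\<Sum>j\<in>(UNIV::12 set). f j) = (f k :: rat)"
proof -
  assume h: "\<forall>j. j \<noteq> k \<longrightarrow> f j = 0"
  have "(\<Sum>j\<in>(UNIV::12 set). f j) = (\<Sum>j\<in>UNIV. if j = k then f k else 0)"
    using h by (intro sum.cong) auto
  then show ?thesis by (simp add: sum.delta)
qed

lemma unit_M22:
  assumes x: "x \<in> M22" and s: "(\<Sum>k\<in>UNIV. x $ k * x $ k) = 1"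
  shows "\<exists>k. x $ k * x $ k = 1 \<and> (\<forall>j. j \<noteq> k \<longrightarrow> x $ j = 0)"
proof -
  obtain p q where h: "halfint x" and pq: "pat x = selC p q" using x M22_iff inC_def by blast
  have nn: "0 \<le> x $ k * x $ k" for k by simp
  have pq0: "(p, q) = (False, False)"
  proof (rule ccontr)
    assume "(p, q) \<noteq> (False, False)"
    then have c8: "card {k. pat x k} = 8" using card_selC pq by simp
    have "(\<Sum>k\<in>{k. pat x k}. (1/4::rat)) \<le> (\<Sum>k\<in>{k. pat x k}. x $ k * x $ k)"
      using half_sq h by (intro sum_mono) (auto simp: halfint_def pat_def)
    also have "\<dots> \<le> (\<Sum>k\<in>UNIV. x $ k * x $ k)" by (intro sum_mono2) auto
    finally show False using c8 s by simp
  qed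
  then have zi: "x $ k \<in> \<int>" for k using pq unfolding pat_def selC_def fun_eq_iff by auto
  define T where "T = {k. x $ k \<noteq> 0}"
  have "(\<Sum>k\<in>UNIV. x $ k * x $ k) = (\<Sum>k\<in>T. x $ k * x $ k)"
    unfolding T_def by (intro sum.mono_neutral_right) auto
  also have "(\<Sum>k\<in>T. (1::rat)) \<le> (\<Sum>k\<in>T. x $ k * x $ k)"
    using int_sq zi unfolding T_def by (intro sum_mono) auto
  ultimately have "card T \<le> 1" using s by simp
  moreover have "T \<noteq> {}"
  proof
    assume "T = {}"
    then have "\<forall>k. x $ k = 0" unfolding T_def by auto
    then show False using s by simp
  qed
  moreover have "finite T" by simp
  ultimately have "card T = 1" using card_0_eq[of T] by linarith
  then obtain k where T: "T = {k}" using card_1_singletonE by blast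
  then have "\<forall>j. j \<noteq> k \<longrightarrow> x $ j = 0" unfolding T_def by auto
  moreover then have "(\<Sum>j\<in>UNIV. x $ j * x $ j) = x $ k * x $ k" by (intro sum_single) auto
  ultimately show ?thesis using s by auto
qed

lemma col_nth: fixes A :: "rat^12^12" shows "(A *v axis i 1) $ k = A $ k $ i"
proof -
  have "(A *v axis i 1) $ k = (\<Sum>j\<in>UNIV. if j = i then A $ k $ i else (0::rat))"
    unfolding matrix_vector_mult_def vec_lambda_beta by (intro sum.cong) (auto simp: axis_def)
  then show ?thesis by (simp add: sum.delta)
qed

lemma axis_M22: "axis i 1 \<in> M22"
  apply (rule M22_intro[where a="\<lambda>j. if j = i then 1 else 0" and m=0 and n=0])
  by (simp add: axis_def)

lemma bform_axis: "bform (axis i 1) (axis j 1) = (if i = j then -2 else 0)"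
proof -
  have "(\<Sum>k\<in>UNIV. (axis i 1 :: rat^12) $ k * axis j 1 $ k) = (\<Sum>k\<in>UNIV. if k = i then (if i = j then 1 else 0) else 0)"
    by (intro sum.cong) (auto simp: axis_def)
  then show ?thesis unfolding bform_def by (simp add: sum.delta)
qed

lemma signed_perm:
  assumes A: "A \<in> OM22"
  shows "\<exists>\<pi>. inj \<pi> \<and> (\<forall>i. A $ \<pi> i $ i * A $ \<pi> i $ i = 1 \<and> (\<forall>k. k \<noteq> \<pi> i \<longrightarrow> A $ k $ i = 0))"
proof -
  have "\<forall>i. \<exists>k. A $ k $ i * A $ k $ i = 1 \<and> (\<forall>j. j \<noteq> k \<longrightarrow> A $ j $ i = 0)"
  proof
    fix i
    have m: "A *v axis i 1 \<in> M22" using OM22_M[OF A axis_M22] .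
    have "bform (A *v axis i 1) (A *v axis i 1) = -2" using OM22_form[OF A] bform_axis by simp
    then have "(\<Sum>k\<in>UNIV. (A *v axis i 1) $ k * (A *v axis i 1) $ k) = 1" unfolding bform_def by simp
    from unit_M22[OF m this] show "\<exists>k. A $ k $ i * A $ k $ i = 1 \<and> (\<forall>j. j \<noteq> k \<longrightarrow> A $ j $ i = 0)"
      unfolding col_nth .
  qed
  then obtain \<pi> where pi: "\<forall>i. A $ \<pi> i $ i * A $ \<pi> i $ i = 1 \<and> (\<forall>k. k \<noteq> \<pi> i \<longrightarrow> A $ k $ i = 0)"
    by metis
  have "inj \<pi>"
  proof (rule injI, rule ccontr)
    fix i j assume e: "\<pi> i = \<pi> j" and ne: "i \<noteq> j"
    have "bform (A *v axis i 1) (A *v axis j 1) = 0" using OM22_form[OF A] bform_axis ne by simp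
    moreover have "(\<Sum>k\<in>UNIV. (A *v axis i 1) $ k * (A *v axis j 1) $ k) = A $ \<pi> i $ i * A $ \<pi> i $ j"
      unfolding col_nth using pi by (intro sum_single) auto
    ultimately have "A $ \<pi> i $ i * A $ \<pi> i $ j = 0" unfolding bform_def by simp
    moreover have "A $ \<pi> i $ i \<noteq> 0" "A $ \<pi> i $ j \<noteq> 0" using pi e by (metis mult_zero_left zero_neq_one)+
    ultimately show False by simp
  qed
  then show ?thesis using pi by blast
qed

lemma perm_apply:
  assumes "inj \<pi>" "\<forall>i. A $ \<pi> i $ i * A $ \<pi> i $ i = 1 \<and> (\<forall>k. k \<noteq> \<pi> i \<longrightarrow> A $ k $ i = (0::rat))"
  shows "pat (A *v y) (\<pi> i) = pat y i"
proof -
  have "(A *v y) $ \<pi> i = (\<Sum>j\<in>UNIV. A $ \<pi> i $ j * y $ j)" unfolding matrix_vector_mult_def by simp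
  also have "\<dots> = A $ \<pi> i $ i * y $ i"
  proof (rule sum_single, intro allI impI)
    fix j assume "j \<noteq> i"
    then have "\<pi> i \<noteq> \<pi> j" using assms(1) by (metis injD)
    then show "A $ \<pi> i $ j * y $ j = 0" using assms(2) by auto
  qed
  finally have e: "(A *v y) $ \<pi> i = A $ \<pi> i $ i * y $ i" .
  have "A $ \<pi> i $ i = 1 \<or> A $ \<pi> i $ i = -1" using assms(2)
    by (metis mult_cancel_right1 square_eq_1_iff)
  then show ?thesis unfolding pat_def e using halfint_neg by auto
qed

lemma le2: "(c::nat) \<le> 2 \<longleftrightarrow> c = 0 \<or> c = 1 \<or> c = 2" by auto

lemma F_perm: fixes x :: "nat \<Rightarrow> nat" and c0 c1 c2 :: nat shows "c0 \<le> 2 \<Longrightarrow> c1 \<le> 2 \<Longrightarrow> c2 \<le> 2 \<Longrightarrow> c0 \<noteq> c1 \<Longrightarrow> c0 \<noteq> c2 \<Longrightarrow> c1 \<noteq> c2 \<Longrightarrow>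
  F (x c0) (x c1) (x c2) = F (x 0) (x 1) (x 2)"
  unfolding le2 by (elim disjE) (simp_all, (metis F_sym)+)

definition beta :: "12 \<Rightarrow> nat" where "beta k = (if k \<in> Bk 0 then 0 else if k \<in> Bk 1 then 1 else 2)"
definition sb :: "bool \<Rightarrow> bool \<Rightarrow> nat \<Rightarrow> bool" where "sb p q b = (if b = 0 then p else if b = 1 then p \<noteq> q else q)"
definition codeinv :: "bool \<Rightarrow> bool \<Rightarrow> nat" where "codeinv x y = (if x \<and> \<not> y then 0 else if x \<and> y then 1 else 2)"

lemma beta_le: "beta k \<le> 2" by (simp add: beta_def)

lemma beta_Bk: "b \<le> 2 \<Longrightarrow> k \<in> Bk b \<longleftrightarrow> beta k = b"
  unfolding le2 using lt8_or[of k] by (auto simp: beta_def Bk_char Bk_char1)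

lemma selC_beta: "selC p q k = sb p q (beta k)"
  using lt8_or[of k] by (auto simp: beta_def sb_def selC_def Bk_char Bk_char1)

lemma beta_code: "beta i = codeinv (i < 8) (4 \<le> i)"
  using lt8_or[of i] by (auto simp: beta_def codeinv_def Bk_char Bk_char1)

lemma beta_vals: "beta 0 = 0" "beta 4 = 1" "beta 8 = 2"
  by (simp_all add: beta_def Bk_def)

lemma pat_h1: "pat h1 i = (i < 8)" and pat_h2: "pat h2 i = (4 \<le> i)"
proof -
  have h: "(1/2 :: rat) \<notin> \<int>" using hz[of 1] by simp
  show "pat h1 i = (i < 8)" using h by (simp add: pat_def h1_nth)
  show "pat h2 i = (4 \<le> i)" using h by (simp add: pat_def h2_nth)
qed

lemma h1_M22: "h1 \<in> M22" by (rule M22_intro[where a="\<lambda>_. 0" and m=1 and n=0]) simp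
lemma h2_M22: "h2 \<in> M22" by (rule M22_intro[where a="\<lambda>_. 0" and m=0 and n=1]) simp

lemma Tw_OM22:
  assumes A: "A \<in> OM22"
  shows "Tw (pat (A *v y)) = Tw (pat y)"
proof -
  obtain \<pi> where inj: "inj \<pi>" and pi: "\<forall>i. A $ \<pi> i $ i * A $ \<pi> i $ i = 1 \<and> (\<forall>k. k \<noteq> \<pi> i \<longrightarrow> A $ k $ i = 0)"
    using signed_perm[OF A] by blast
  have pv: "pat (A *v z) (\<pi> i) = pat z i" for z i using perm_apply[OF inj pi] .
  have surj: "surj \<pi>" using finite_UNIV_inj_surj[OF finite_class.finite_UNIV inj] .
  obtain p q where pq: "pat (A *v h1) = selC p q" using OM22_M[OF A h1_M22] M22_iff inC_def by blast
  obtain p' q' where pq': "pat (A *v h2) = selC p' q'" using OM22_M[OF A h2_M22] M22_iff inC_def by blast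
  have s1: "(i < 8) = sb p q (beta (\<pi> i))" for i
  proof -
    have "(i < 8) = pat (A *v h1) (\<pi> i)" using pv[of h1 i] pat_h1[of i] by simp
    then show ?thesis using pq selC_beta[of p q "\<pi> i"] by simp
  qed
  have s2: "(4 \<le> i) = sb p' q' (beta (\<pi> i))" for i
  proof -
    have "(4 \<le> i) = pat (A *v h2) (\<pi> i)" using pv[of h2 i] pat_h2[of i] by simp
    then show ?thesis using pq' selC_beta[of p' q' "\<pi> i"] by simp
  qed
  define c where "c b = codeinv (sb p q b) (sb p' q' b)" for b
  have key: "beta i = c (beta (\<pi> i))" for i
  proof -
    have "beta i = codeinv (i < 8) (4 \<le> i)" by (rule beta_code)
    also have "\<dots> = c (beta (\<pi> i))" by (simp only: c_def s1[of i] s2[of i])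
    finally show ?thesis .
  qed
  have cle: "c b \<le> 2" for b by (simp add: c_def codeinv_def)
  have img: "c ` {0,1,2} = {0,1,2}"
  proof
    show "c ` {0,1,2} \<subseteq> {0,1,2}" using cle le2 by auto
    have "b' \<in> c ` {0,1,2}" if bb: "b' \<in> {0,1,2}" for b'
    proof -
      obtain i where "beta i = b'" using bb beta_vals by (metis empty_iff insert_iff)
      then have "b' = c (beta (\<pi> i))" using key[of i] by simp
      moreover have "beta (\<pi> i) \<in> {0,1,2}" using beta_le le2 by auto
      ultimately show ?thesis by blast
    qed
    then show "{0,1,2} \<subseteq> c ` {0,1,2}" by blast
  qed
  have cinj: "inj_on c {0,1,2}"
  proof (rule eq_card_imp_inj_on)
    show "finite {0::nat,1,2}" by simp
    show "card (c ` {0,1,2}) = card {0::nat,1,2}" by (simp only: img)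
  qed
  have wtc: "wt b (pat (A *v y)) = wt (c b) (pat y)" if b: "b \<le> 2" for b
  proof -
    have e: "{k \<in> Bk b. pat (A *v y) k} = \<pi> ` {i \<in> Bk (c b). pat y i}"
    proof (rule set_eqI, rule iffI)
      fix k assume k: "k \<in> {k \<in> Bk b. pat (A *v y) k}"
      obtain i where i: "k = \<pi> i" using surj by (metis surjD)
      have "beta (\<pi> i) = b" using k i beta_Bk[OF b] by auto
      then have "beta i = c b" using key[of i] by simp
      then have "i \<in> Bk (c b)" using beta_Bk[OF cle] by simp
      moreover have "pat y i" using k i pv by auto
      ultimately show "k \<in> \<pi> ` {i \<in> Bk (c b). pat y i}" using i by blast
    next
      fix k assume "k \<in> \<pi> ` {i \<in> Bk (c b). pat y i}"
      then obtain i where i: "k = \<pi> i" "i \<in> Bk (c b)" "pat y i" by blast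
      then have "beta i = c b" using beta_Bk[OF cle] by simp
      then have "c (beta (\<pi> i)) = c b" using key[of i] by simp
      moreover have "beta (\<pi> i) \<in> {0,1,2}" "b \<in> {0,1,2}" using beta_le b le2 by auto
      ultimately have "beta (\<pi> i) = b" using cinj by (meson inj_onD)
      then show "k \<in> {k \<in> Bk b. pat (A *v y) k}" using i pv beta_Bk[OF b] by auto
    qed
    show ?thesis unfolding wt_def e by (rule card_image) (meson inj inj_on_subset subset_UNIV)
  qed
  have "Tw (pat (A *v y)) = F (wt (c 0) (pat y)) (wt (c 1) (pat y)) (wt (c 2) (pat y))"
    unfolding Tw_def using wtc by simp
  also have "\<dots> = Tw (pat y)" unfolding Tw_def
  proof (rule F_perm[where x="\<lambda>b. wt b (pat y)"])
    show "c 0 \<le> 2" "c 1 \<le> 2" "c 2 \<le> 2" using cle by auto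
    show "c 0 \<noteq> c 1" "c 0 \<noteq> c 2" "c 1 \<noteq> c 2" using cinj by (auto dest: inj_onD)
  qed
  finally show ?thesis .
qed

lemma gens_facts: assumes "g \<in> set gensL"
  shows "length g = 12" "set g \<subseteq> {..<12}" "\<forall>n<12. g ! (g ! n) = n" "\<forall>c\<in>set cwL. permL g c \<in> set cwL"
proof -
  have h: "length g = 12 \<and> list_all (\<lambda>i. i < 12) g \<and> map (\<lambda>i. g ! (g ! i)) [0..<12] = [0..<12] \<and>
   list_all (\<lambda>c. permL g c \<in> set cwL) cwL" using C6 assms by (simp add: list_all_iff)
  then show "length g = 12" "set g \<subseteq> {..<12}" "\<forall>c\<in>set cwL. permL g c \<in> set cwL"
    by (auto simp: list_all_iff)
  show "\<forall>n<12. g ! (g ! n) = n"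
  proof (intro allI impI)
    fix n :: nat assume n: "n < 12"
    have "map (\<lambda>i. g ! (g ! i)) [0..<12] ! n = [0..<12] ! n" using h by simp
    then show "g ! (g ! n) = n" using n by simp
  qed
qed

lemma gperm_invol: assumes "g \<in> set gensL" shows "gperm g (gperm g i) = i"
proof -
  note gf = gens_facts[OF assms]
  have j: "jx i < 12" using jx by blast
  have "g ! jx i \<in> set g" using j gf(1) by simp
  then have gj: "g ! jx i < 12" using gf(2) by auto
  have "gperm g (gperm g i) = L12 ! (g ! (g ! jx i))" unfolding gperm_def using jx_L12[OF gj] by simp
  also have "\<dots> = L12 ! jx i" using gf(3) j by simp
  also have "\<dots> = i" using jx by blast
  finally show ?thesis .
qed

lemma inC_tl: "inC c \<longleftrightarrow> tl12 c \<in> set cwL"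
proof
  assume "inC c"
  then obtain p q where "c = selC p q" unfolding inC_def by blast
  then show "tl12 c \<in> set cwL" by (cases p; cases q) (simp_all add: tl12_selC cwL_def)
next
  assume "tl12 c \<in> set cwL"
  then obtain p q where "tl12 c = selCL p q" unfolding cwL_def by auto
  then have "tl12 c = tl12 (selC p q)" by (simp add: tl12_selC)
  then show "inC c" unfolding tl12_inj inC_def by blast
qed

lemma inC_gperm: "g \<in> set gensL \<Longrightarrow> inC c \<Longrightarrow> inC (c \<circ> gperm g)"
  unfolding inC_tl using gens_facts tl12_gperm by metis

lemma pat_Pm: "pat (Pm g *v y) = pat y \<circ> gperm g"
  by (simp add: pat_def Pm_apply fun_eq_iff)

lemma halfint_Pm: "halfint y \<Longrightarrow> halfint (Pm g *v y)"
  by (simp add: halfint_def Pm_apply)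

lemma Pm_invol: "g \<in> set gensL \<Longrightarrow> Pm g *v (Pm g *v y) = y"
  by (simp add: vec_eq_iff Pm_apply gperm_invol)

lemma Pm_M22: "g \<in> set gensL \<Longrightarrow> x \<in> M22 \<Longrightarrow> Pm g *v x \<in> M22"
  unfolding M22_iff using halfint_Pm pat_Pm inC_gperm by metis

lemma Pm_OM22: assumes g: "g \<in> set gensL" shows "Pm g \<in> OM22"
proof -
  have sw: "(\<Sum>i\<in>UNIV. f (gperm g i)) = (\<Sum>i\<in>UNIV. f i)" for f :: "12 \<Rightarrow> rat"
    by (rule sum.reindex_bij_witness[of _ "gperm g" "gperm g"]) (auto simp: gperm_invol[OF g])
  have form: "bform (Pm g *v x) (Pm g *v y) = bform x y" for x y
    unfolding bform_def Pm_apply using sw[of "\<lambda>i. x $ i * y $ i"] by simp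
  have "(\<lambda>x. Pm g *v x) ` M22 = M22"
  proof
    show "(\<lambda>x. Pm g *v x) ` M22 \<subseteq> M22" using Pm_M22[OF g] by auto
    show "M22 \<subseteq> (\<lambda>x. Pm g *v x) ` M22"
    proof
      fix x assume "x \<in> M22"
      then have "Pm g *v x \<in> M22" "x = Pm g *v (Pm g *v x)" using Pm_M22[OF g] Pm_invol[OF g] by auto
      then show "x \<in> (\<lambda>x. Pm g *v x) ` M22" by blast
    qed
  qed
  then show ?thesis unfolding OM22_def using form by blast
qed

fun rk2 :: "bool list \<Rightarrow> nat" where
  "rk2 [] = 0" | "rk2 (b # bs) = (if b then 2 ^ length bs else 0) + rk2 bs"

lemma rk2_lt: "rk2 bs < 2 ^ length bs"
  by (induction bs) auto

lemma lexl_rk2: "length a = length b \<Longrightarrow> lexl a b \<Longrightarrow> rk2 a < rk2 b"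
proof (induction a b rule: lexl.induct)
  case (1 a as b bs)
  then have l: "length as = length bs" by simp
  show ?case
  proof (cases "\<not> a \<and> b")
    case True
    then show ?thesis using rk2_lt[of as] l by simp
  next
    case False
    then have "a = b" "lexl as bs" using 1 by auto
    then show ?thesis using 1 l by simp
  qed
qed auto

lemma incr_sorted: "incr xs \<Longrightarrow> (\<forall>x\<in>set xs. length x = n) \<Longrightarrow> sorted_wrt (<) (map rk2 xs)"
proof (induction xs rule: incr.induct)
  case (1 x y zs)
  have t: "transp ((<) :: nat \<Rightarrow> nat \<Rightarrow> bool)" by (auto simp: transp_def)
  have xy: "rk2 x < rk2 y" using 1 lexl_rk2 by auto
  have r: "sorted_wrt (<) (map rk2 (y # zs))" using 1 by auto
  then have "\<forall>z\<in>set zs. rk2 x < rk2 z" using xy by auto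
  then show ?case using xy r by simp
qed auto

lemma n3_len: "a \<in> set n3 \<Longrightarrow> length a = 3" by (auto simp: n3_def)
lemma n4_len: "a \<in> set n4 \<Longrightarrow> length a = 4" by (auto simp: n4_def)
lemma n3_all: "length a = 3 \<Longrightarrow> a \<in> set n3"
proof -
  assume "length a = 3"
  then have "\<exists>x y z. a = [x, y, z]" by (auto simp: length_Suc_conv numeral_eq_Suc)
  then obtain x y z where "a = [x, y, z]" by blast
  then show ?thesis by (cases x; cases y; cases z) (simp_all add: n3_def)
qed
lemma n4_all': "length a = 4 \<Longrightarrow> a \<in> set n4"
proof -
  assume "length a = 4"
  then have "\<exists>x y z u. a = [x, y, z, u]" by (auto simp: length_Suc_conv numeral_eq_Suc)
  then obtain x y z u where "a = [x, y, z, u]" by blast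
  then show ?thesis by (cases x; cases y; cases z; cases u) (simp_all add: n4_def)
qed

lemma keys3_iff: "x \<in> set keys3 \<longleftrightarrow> (\<exists>a\<in>set n3. \<exists>b\<in>set n3. \<exists>c\<in>set n4. even (cnt b) = even (cnt a) \<and>
   even (cnt c) = even (cnt a) \<and> x = False # a @ False # b @ c)"
  unfolding keys3_def by auto

lemma keys3_len: "x \<in> set keys3 \<Longrightarrow> length x = 12"
  unfolding keys3_iff using n3_len n4_len by auto

lemma keys3_dist: "distinct keys3"
proof -
  have "sorted_wrt (<) (map rk2 keys3)" using incr_sorted[OF C1, of 12] keys3_len by blast
  then have "distinct (map rk2 keys3)" by (simp add: strict_sorted_iff)
  then show ?thesis by (simp add: distinct_map)
qed

lemma keys3_mem:
  assumes l: "length k = 12" and k0: "\<not> k ! 0" and k4: "\<not> k ! 4"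
    and e1: "even (bw 0 k + bw 1 k)" and e2: "even (bw 1 k + bw 2 k)"
  shows "k \<in> set keys3"
proof -
  define a where "a = take 3 (drop 1 k)"
  define b where "b = take 3 (drop 5 k)"
  define c where "c = drop 8 k"
  have k: "k = False # a @ False # b @ c"
  proof (rule nth_equalityI)
    show "length k = length (False # a @ False # b @ c)" using l by (simp add: a_def b_def c_def)
    fix i assume "i < length k"
    then have "i < 12" using l by simp
    then have "i = 0 \<or> i = 1 \<or> i = 2 \<or> i = 3 \<or> i = 4 \<or> i = 5 \<or> i = 6 \<or> i = 7 \<or> i = 8 \<or> i = 9 \<or> i = 10 \<or> i = 11"
      by (simp add: less_Suc_eq numeral_eq_Suc)
    then show "k ! i = (False # a @ False # b @ c) ! i" using l k0 k4
      by (elim disjE) (simp_all add: a_def b_def c_def nth_append numeral_2_eq_2 numeral_3_eq_3)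
  qed
  have la: "length a = 3" and lb: "length b = 3" and lc: "length c = 4" using l by (simp_all add: a_def b_def c_def)
  have "bw 0 k = cnt a" "bw 1 k = cnt b" "bw 2 k = cnt c"
    using la lb lc by (subst k, simp add: bw_def cnt_def)+
  then show ?thesis unfolding keys3_iff using n3_all[OF la] n3_all[OF lb] n4_all'[OF lc] e1 e2 k by auto
qed

definition Tc :: "(rat^12) set \<Rightarrow> nat" where "Tc s = Tl (key s)"

lemma Tc_coset: "halfint y \<Longrightarrow> Tc (coset y) = Tw (pat y)"
  by (simp add: Tc_def key_coset Tl_tl Tw_can)

lemma Adisc_iff: "s \<in> Adisc \<longleftrightarrow> (\<exists>y\<in>M22dual. s = coset y)" unfolding Adisc_def by auto

lemma key_keys3: "y \<in> M22dual \<Longrightarrow> key (coset y) \<in> set keys3"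
proof -
  assume y: "y \<in> M22dual"
  then have h: "halfint y" by (rule halfint_dual)
  define w where "w = pat y"
  have c: "can w = xorf w (selC (w 0) (w 0 \<noteq> w 4))" by (simp add: can_def)
  have ic: "inC (selC (w 0) (w 0 \<noteq> w 4))" by (auto simp: inC_def)
  have par: "even (wt b (can w)) = even (wt b w)" if "b \<le> 2" for b
    unfolding c using wt_parity_xor[OF ic that] .
  have d: "even (wt 0 w + wt 1 w)" "even (wt 1 w + wt 2 w)" using y dual_iff3 w_def by auto
  have k: "key (coset y) = tl12 (can w)" using key_coset[OF h] w_def by simp
  show ?thesis unfolding k
  proof (rule keys3_mem)
    show "length (tl12 (can w)) = 12" by simp
    show "\<not> tl12 (can w) ! 0" "\<not> tl12 (can w) ! 4" by (simp_all add: tl12_0 can_0)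
    show "even (bw 0 (tl12 (can w)) + bw 1 (tl12 (can w)))"
      unfolding bw_tl using par[of 0] par[of 1] d by auto
    show "even (bw 1 (tl12 (can w)) + bw 2 (tl12 (can w)))"
      unfolding bw_tl using par[of 2] par[of 1] d by auto
  qed
qed

lemma vk_dual: assumes "length k = 12" "keyL k = k" "even (bw 0 k + bw 1 k)" "even (bw 1 k + bw 2 k)"
  shows "vk k \<in> M22dual \<and> key (coset (vk k)) = k"
proof
  have p: "tl12 (pat (vk k)) = k" using vk_pat assms(1) by simp
  show "vk k \<in> M22dual" unfolding dual_iff3 using vk_halfint assms(3,4) p bw_tl by metis
  show "key (coset (vk k)) = k" using key_coset[OF vk_halfint] keyL_tl p assms(2) by metis
qed

lemma keys3_facts: "k \<in> set keys3 \<Longrightarrow> keyL k = k \<and> even (bw 0 k + bw 1 k) \<and> even (bw 1 k + bw 2 k) \<and> Tl k < 7"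
  using C2 by (simp add: list_all_iff)

lemma key_bij: "bij_betw key Adisc (set keys3)"
proof (rule bij_betw_imageI)
  show "inj_on key Adisc"
  proof
    fix s s' assume "s \<in> Adisc" "s' \<in> Adisc" "key s = key s'"
    then show "s = s'" using Adisc_iff key_inj halfint_dual by metis
  qed
  show "key ` Adisc = set keys3"
  proof
    show "key ` Adisc \<subseteq> set keys3" using key_keys3 Adisc_iff by auto
    show "set keys3 \<subseteq> key ` Adisc"
    proof
      fix k assume k: "k \<in> set keys3"
      then have "vk k \<in> M22dual \<and> key (coset (vk k)) = k" using vk_dual keys3_facts keys3_len by blast
      then show "k \<in> key ` Adisc" unfolding Adisc_def by (metis imageI)
    qed
  qed
qed

lemma card_K: "card {s \<in> Adisc. Tc s = t} = length (filter (\<lambda>k. Tl k = t) keys3)"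
proof -
  have ka: "key ` Adisc = set keys3" and ij: "inj_on key Adisc" using key_bij unfolding bij_betw_def by blast+
  have inj: "inj_on key {s \<in> Adisc. Tc s = t}" using ij by (rule inj_on_subset) blast
  have img: "key ` {s \<in> Adisc. Tc s = t} = {k \<in> set keys3. Tl k = t}"
  proof
    show "key ` {s \<in> Adisc. Tc s = t} \<subseteq> {k \<in> set keys3. Tl k = t}"
    proof
      fix k assume "k \<in> key ` {s \<in> Adisc. Tc s = t}"
      then obtain s where "s \<in> Adisc" "Tc s = t" "k = key s" by blast
      then show "k \<in> {k \<in> set keys3. Tl k = t}" using ka unfolding Tc_def by blast
    qed
    show "{k \<in> set keys3. Tl k = t} \<subseteq> key ` {s \<in> Adisc. Tc s = t}"
    proof
      fix k assume k: "k \<in> {k \<in> set keys3. Tl k = t}"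
      then obtain s where "s \<in> Adisc" "k = key s" using ka by (metis (no_types, lifting) imageE mem_Collect_eq)
      then show "k \<in> key ` {s \<in> Adisc. Tc s = t}" using k unfolding Tc_def by blast
    qed
  qed
  have "card {s \<in> Adisc. Tc s = t} = card {k \<in> set keys3. Tl k = t}"
    using card_image[OF inj] img by simp
  also have "{k \<in> set keys3. Tl k = t} = {k. Tl k = t} \<inter> set keys3" by blast
  also have "card \<dots> = length (filter (\<lambda>k. Tl k = t) keys3)"
    using distinct_length_filter[OF keys3_dist] by simp
  finally show ?thesis .
qed

definition N :: "nat \<Rightarrow> (rat^12) set" where "N t = coset (vk (nfs ! t))"

lemma nfs_facts: "length nfs = 7" "t < 7 \<Longrightarrow> Tl (nfs ! t) = t"
  "t < 7 \<Longrightarrow> vk (nfs ! t) \<in> M22dual \<and> key (coset (vk (nfs ! t))) = nfs ! t"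
proof -
  have c: "map Tl nfs = [0..<7]" "list_all (\<lambda>k. length k = 12 \<and> keyL k = k \<and> even (bw 0 k + bw 1 k) \<and> even (bw 1 k + bw 2 k)) nfs"
    using C5 by auto
  show l: "length nfs = 7" using arg_cong[OF c(1), of length] by simp
  assume t: "t < 7"
  show "Tl (nfs ! t) = t" using arg_cong[OF c(1), of "\<lambda>xs. xs ! t"] t l by simp
  have "nfs ! t \<in> set nfs" using t l by simp
  then show "vk (nfs ! t) \<in> M22dual \<and> key (coset (vk (nfs ! t))) = nfs ! t"
    using c(2) vk_dual by (simp add: list_all_iff)
qed

lemma C7: "list_all (\<lambda>i. i < length gensL) witL" by code_simp

lemma coset_of_mem: "z \<in> coset y \<Longrightarrow> coset z = coset y" using coset_mem coset_eq by blast

lemma maps_id: "maps (mat 1) (coset y) (coset y)" unfolding maps_def using coset_of_mem by simp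

lemma can_xor: "inC c \<Longrightarrow> can (xorf v c) = can v"
proof -
  assume "inC c"
  moreover have "xorf (xorf v c) v = c" by (auto simp: xorf_def fun_eq_iff)
  ultimately show ?thesis using can_eq by metis
qed

lemma bridge: assumes g: "g \<in> set gensL" and h: "halfint y"
  shows "key (coset (Pm g *v y)) = keyL (permL g (key (coset y)))"
proof -
  note gf = gens_facts[OF g]
  define c where "c = selC (pat y 0) (pat y 0 \<noteq> pat y 4)"
  have ic: "inC c" by (auto simp: inC_def c_def)
  have "keyL (permL g (key (coset y))) = keyL (permL g (tl12 (can (pat y))))" using key_coset[OF h] by simp
  also have "\<dots> = tl12 (can (can (pat y) \<circ> gperm g))" using tl12_gperm[OF gf(1,2)] keyL_tl by metis
  also have "can (pat y) \<circ> gperm g = xorf (pat y \<circ> gperm g) (c \<circ> gperm g)"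
    unfolding can_def c_def by (simp add: xorf_def fun_eq_iff)
  also have "can \<dots> = can (pat y \<circ> gperm g)" using can_xor inC_gperm[OF g ic] by blast
  also have "tl12 \<dots> = key (coset (Pm g *v y))" using key_coset[OF halfint_Pm[OF h]] pat_Pm by simp
  finally show ?thesis by simp
qed

lemma transitive:
  "s \<in> Adisc \<Longrightarrow> (\<exists>A\<in>OM22. maps A s (N (Tc s))) \<and> (\<exists>B\<in>OM22. maps B (N (Tc s)) s)"
proof (induction "rk2 (key s)" arbitrary: s rule: less_induct)
  case less
  obtain y where y: "y \<in> M22dual" and s: "s = coset y" using less.prems Adisc_iff by blast
  have h: "halfint y" using y halfint_dual by blast
  have k: "key s \<in> set keys3" using key_keys3[OF y] s by simp
  then obtain n where n: "n < length keys3" "keys3 ! n = key s" by (metis in_set_conv_nth)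
  have lw: "length witL = length keys3" using list_all2_lengthD[OF C4] by simp
  have w: "key s \<in> set nfs \<or> lexl (keyL (permL (gensL ! (witL ! n)) (key s))) (key s)"
    using list_all2_nthD[OF C4 n(1)] unfolding n(2) .
  have "witL ! n < length gensL" using C7 n(1) lw unfolding list_all_length by simp
  then have wg: "gensL ! (witL ! n) \<in> set gensL" by (rule nth_mem)
  show ?case
  proof (cases "key s \<in> set nfs")
    case True
    then obtain t where t: "t < 7" "nfs ! t = key s" using nfs_facts(1) by (metis in_set_conv_nth)
    have "Tc s = t" unfolding Tc_def using nfs_facts(2)[OF t(1)] t(2) by simp
    moreover have "N t = s"
      unfolding N_def using nfs_facts(3)[OF t(1)] t(2) key_inj[OF vk_halfint h] s by simp
    ultimately show ?thesis using OM22_id maps_id s by auto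
  next
    case False
    define g where "g = gensL ! (witL ! n)"
    have g: "g \<in> set gensL" using wg g_def by simp
    define s' where "s' = coset (Pm g *v y)"
    have s'A: "s' \<in> Adisc" unfolding s'_def Adisc_iff using OM22_dual[OF Pm_OM22[OF g] y] by blast
    have ks': "key s' = keyL (permL g (key s))" unfolding s'_def s using bridge[OF g h] .
    have lx: "lexl (key s') (key s)" using w False unfolding ks' g_def by blast
    have "key s' \<in> set keys3" unfolding s'_def using key_keys3[OF OM22_dual[OF Pm_OM22[OF g] y]] .
    then have "length (key s') = 12" "length (key s) = 12" using k keys3_len by auto
    then have "rk2 (key s') < rk2 (key s)" using lexl_rk2 lx by simp
    then have IH: "(\<exists>A\<in>OM22. maps A s' (N (Tc s'))) \<and> (\<exists>B\<in>OM22. maps B (N (Tc s')) s')"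
      using less.hyps s'A by blast
    have "Tc s' = Tc s" unfolding s'_def s
      unfolding Tc_coset[OF halfint_Pm[OF h]] Tc_coset[OF h] Tw_OM22[OF Pm_OM22[OF g]] ..
    then have IH': "(\<exists>A\<in>OM22. maps A s' (N (Tc s))) \<and> (\<exists>B\<in>OM22. maps B (N (Tc s)) s')" using IH by simp
    have m1: "maps (Pm g) s s'" unfolding s s'_def using maps_coset[OF Pm_OM22[OF g]] .
    have m2: "maps (Pm g) s' s" unfolding s s'_def using maps_coset[OF Pm_OM22[OF g], of "Pm g *v y"] Pm_invol[OF g] by simp
    from IH' obtain A B where A: "A \<in> OM22" "maps A s' (N (Tc s))" and B: "B \<in> OM22" "maps B (N (Tc s)) s'" by blast
    have "A ** Pm g \<in> OM22" "maps (A ** Pm g) s (N (Tc s))"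
      using OM22_mult[OF Pm_OM22[OF g] A(1)] maps_comp[OF m1 A(2)] by auto
    moreover have "Pm g ** B \<in> OM22" "maps (Pm g ** B) (N (Tc s)) s"
      using OM22_mult[OF B(1) Pm_OM22[OF g]] maps_comp[OF B(2) m2] by auto
    ultimately show ?thesis by blast
  qed
qed

lemma mod2_shift: "mod2 (x + 2 * of_int k) = mod2 x"
proof -
  have e: "(x + 2 * of_int k) / 2 = x / 2 + of_int k" by simp
  have "\<lfloor>(x + 2 * of_int k) / 2\<rfloor> = \<lfloor>x / 2\<rfloor> + k" unfolding e by (rule floor_add_int[symmetric])
  then show ?thesis unfolding mod2_def by simp
qed

lemma mod2_vals: "mod2 0 = 0" "mod2 (-1/2) = 3/2" "mod2 (-1) = 1" "mod2 (-3/2) = 1/2"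
proof -
  have a: "\<lfloor>(-1/4::rat)\<rfloor> = -1" by (simp add: floor_eq_iff)
  have b: "\<lfloor>(-1/2::rat)\<rfloor> = -1" by (simp add: floor_eq_iff)
  have c: "\<lfloor>(-3/4::rat)\<rfloor> = -1" by (simp add: floor_eq_iff)
  show "mod2 0 = 0" by (simp add: mod2_def)
  show "mod2 (-1/2) = 3/2" using a by (simp add: mod2_def)
  show "mod2 (-1) = 1" using b by (simp add: mod2_def)
  show "mod2 (-3/2) = 1/2" using c by (simp add: mod2_def)
qed

lemma mod2_half: "mod2 (- (of_nat n) / 2) = [0, 3/2, 1, 1/2] ! (n mod 4)"
proof -
  define r where "r = n mod 4"
  define m where "m = n div 4"
  have n: "n = 4 * m + r" unfolding r_def m_def by simp
  have e: "- (of_nat n :: rat) / 2 = - (of_nat r) / 2 + 2 * of_int (- int m)" unfolding n by simp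
  have "mod2 (- (of_nat n) / 2) = mod2 (- (of_nat r) / 2)" unfolding e by (rule mod2_shift)
  moreover have "r < 4" unfolding r_def by simp
  then have "r = 0 \<or> r = 1 \<or> r = 2 \<or> r = 3" by auto
  ultimately show ?thesis unfolding r_def[symmetric] using mod2_vals by auto
qed

lemma bform_self: assumes h: "halfint z"
  shows "mod2 (bform z z) = mod2 (- (of_nat (card {i. pat z i})) / 2)"
proof -
  have "\<forall>i. \<exists>n. 2 * z $ i = of_int n" using h unfolding halfint_def by (metis Ints_cases)
  then obtain s where s: "\<And>i. 2 * z $ i = of_int (s i)" by metis
  have zi: "z $ i = of_int (s i) / 2" for i using s[of i] by simp
  have po: "pat z i \<longleftrightarrow> odd (s i)" for i unfolding pat_def zi using hz by simp
  define d where "d i = ((s i)^2 - (if odd (s i) then 1 else 0)) div 4" for i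
  have sq: "(s i)^2 = 4 * d i + (if odd (s i) then 1 else 0)" for i
  proof -
    have "4 dvd (s i)^2 - (if odd (s i) then 1 else 0)"
    proof (cases "odd (s i)")
      case True
      then obtain t where "s i = 2 * t + 1" by (metis oddE)
      then have "(s i)^2 - 1 = 4 * (t * t + t)" by (simp add: power2_eq_square algebra_simps)
      then show ?thesis using True by simp
    next
      case False
      then obtain t where "s i = 2 * t" by (metis evenE)
      then have "(s i)^2 = 4 * (t * t)" by (simp add: power2_eq_square algebra_simps)
      then show ?thesis using False by simp
    qed
    then show ?thesis unfolding d_def by simp
  qed
  have "(\<Sum>i\<in>UNIV. (s i)^2) = (\<Sum>i\<in>UNIV. 4 * d i + (if odd (s i) then 1 else 0))" using sq by simp
  also have "\<dots> = 4 * (\<Sum>i\<in>UNIV. d i) + (\<Sum>i\<in>UNIV. if odd (s i) then 1 else 0)"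
    by (simp add: sum.distrib sum_distrib_left)
  also have "(\<Sum>i\<in>UNIV. if odd (s i) then 1 else (0::int)) = int (card {i. odd (s i)})"
    using sum.inter_filter[of UNIV "\<lambda>_. (1::int)" "\<lambda>i. odd (s i)"] by simp
  finally have S: "(\<Sum>i\<in>UNIV. (s i)^2) = 4 * (\<Sum>i\<in>UNIV. d i) + int (card {i. odd (s i)})" .
  have "bform z z = - 2 * (\<Sum>i\<in>UNIV. of_int ((s i)^2) / 4)"
    unfolding bform_def zi by (simp add: power2_eq_square)
  also have "\<dots> = - (of_int (\<Sum>i\<in>UNIV. (s i)^2)) / 2"
    by (simp add: sum_divide_distrib[symmetric])
  also have "\<dots> = - (of_nat (card {i. odd (s i)})) / 2 + 2 * of_int (- (\<Sum>i\<in>UNIV. d i))"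
    unfolding S by simp
  finally have e: "bform z z = - (of_nat (card {i. odd (s i)})) / 2 + 2 * of_int (- (\<Sum>i\<in>UNIV. d i))" .
  have "mod2 (bform z z) = mod2 (- (of_nat (card {i. odd (s i)})) / 2)" unfolding e by (rule mod2_shift)
  then show ?thesis using po by simp
qed

definition K :: "nat \<Rightarrow> (rat^12) set set" where "K t = {s \<in> Adisc. Tc s = t}"
definition qv :: "nat \<Rightarrow> rat" where "qv t = [0, 0, 1, 0, 1, 1/2, 3/2] ! t"
definition cv :: "nat \<Rightarrow> nat" where "cv t = [1, 1, 18, 54, 54, 64, 64] ! t"

lemma zero_Adisc: "coset 0 \<in> Adisc" unfolding Adisc_def using M22_sub_dual[OF M22_zero] by blast

lemma Tc_zero: "Tc (coset 0) = 0"
proof -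
  have h: "halfint 0" by (simp add: halfint_def)
  have "pat 0 = (\<lambda>_. False)" by (simp add: pat_def fun_eq_iff)
  then have "wt b (pat 0) = 0" for b by (simp add: wt_def)
  then show ?thesis using Tc_coset[OF h] by (simp add: Tw_def F_def)
qed

lemma card_Kt: "t < 7 \<Longrightarrow> card (K t) = cv t"
proof -
  assume t: "t < 7"
  have "card (K t) = length (filter (\<lambda>k. Tl k = t) keys3)" unfolding K_def by (rule card_K)
  also have "\<dots> = map (\<lambda>t. length (filter (\<lambda>k. Tl k = t) keys3)) [0..<7] ! t" using t by simp
  also have "\<dots> = cv t" unfolding C3 cv_def ..
  finally show ?thesis .
qed

lemma K0: "K 0 = {coset 0}"
proof -
  have "card (K 0) = 1" using card_Kt[of 0] by (simp add: cv_def)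
  moreover have "coset 0 \<in> K 0" unfolding K_def using zero_Adisc Tc_zero by simp
  ultimately show ?thesis by (metis card_1_singletonE singletonD)
qed

lemma Tc_lt7: "s \<in> Adisc \<Longrightarrow> Tc s < 7"
  unfolding Tc_def using key_keys3 keys3_facts Adisc_iff by metis

lemma Kt_ne: "t < 7 \<Longrightarrow> K t \<noteq> {}"
proof
  assume "t < 7" "K t = {}"
  then have "cv t = 0" using card_Kt by fastforce
  moreover have "cv t > 0" using \<open>t < 7\<close> unfolding cv_def
    by (simp add: less_Suc_eq numeral_eq_Suc) (elim disjE; simp)
  ultimately show False by simp
qed

lemma mem_Adisc_halfint: "s \<in> Adisc \<Longrightarrow> z \<in> s \<Longrightarrow> halfint z \<and> coset z = s"
proof -
  assume "s \<in> Adisc" "z \<in> s"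
  then obtain y where y: "y \<in> M22dual" "s = coset y" using Adisc_iff by blast
  then have "z - y \<in> M22" using \<open>z \<in> s\<close> coset_mem by blast
  then have "halfint z" using halfint_add[OF halfint_dual[OF y(1)] halfint_M22] by (metis add_diff_cancel_left' diff_add_cancel add.commute)
  moreover have "coset z = s" using y \<open>z \<in> s\<close> coset_of_mem by blast
  ultimately show ?thesis by blast
qed

lemma class_eq: assumes r: "r \<in> Adisc" shows "disc_class r = K (Tc r)"
proof
  show "disc_class r \<subseteq> K (Tc r)"
  proof
    fix s assume "s \<in> disc_class r"
    then have sA: "s \<in> Adisc" and "disc_rel r s" unfolding disc_class_def by auto
    then obtain A y where A: "A \<in> OM22" and y: "y \<in> r" and s: "s = coset (A *v y)" unfolding disc_rel_def by blast
    have hy: "halfint y" "coset y = r" using mem_Adisc_halfint[OF r y] by auto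
    have "A *v y \<in> s" using s self_coset by simp
    then have hAy: "halfint (A *v y)" using mem_Adisc_halfint[OF sA] by blast
    have "Tc s = Tw (pat (A *v y))" using s Tc_coset[OF hAy] by simp
    also have "\<dots> = Tw (pat y)" using Tw_OM22[OF A] .
    also have "\<dots> = Tc r" using Tc_coset[OF hy(1)] hy(2) by simp
    finally show "s \<in> K (Tc r)" unfolding K_def using sA by simp
  qed
  show "K (Tc r) \<subseteq> disc_class r"
  proof
    fix s assume "s \<in> K (Tc r)"
    then have sA: "s \<in> Adisc" and t: "Tc s = Tc r" unfolding K_def by auto
    obtain A where A: "A \<in> OM22" "maps A r (N (Tc r))" using transitive[OF r] by blast
    obtain B where B: "B \<in> OM22" "maps B (N (Tc r)) s" using transitive[OF sA] t by auto
    have C: "B ** A \<in> OM22" "maps (B ** A) r s" using OM22_mult[OF A(1) B(1)] maps_comp[OF A(2) B(2)] by auto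
    obtain y0 where y0: "y0 \<in> M22dual" "r = coset y0" using r Adisc_iff by blast
    have "y0 \<in> r" using y0 self_coset by simp
    then have "s = coset ((B ** A) *v y0)" using C(2) unfolding maps_def by simp
    then have "disc_rel r s" unfolding disc_rel_def using C(1) \<open>y0 \<in> r\<close> by blast
    then show "s \<in> disc_class r" unfolding disc_class_def using sA by simp
  qed
qed

lemma elem_ord2: assumes s: "s \<in> Adisc" and nz: "s \<noteq> coset 0" shows "elem_ord s = 2"
  unfolding elem_ord_def
proof (rule Least_equality)
  show "0 < (2::nat) \<and> (\<forall>y\<in>s. of_nat 2 *s y \<in> M22)"
  proof (intro conjI ballI)
    fix y assume "y \<in> s"
    then have h: "halfint y" using mem_Adisc_halfint[OF s] by blast
    have "(of_nat 2 *s y) $ i \<in> \<int>" for i using h by (simp add: halfint_def)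
    then have "\<forall>i. \<exists>n. (of_nat 2 *s y) $ i = of_int n" by (metis Ints_cases)
    then obtain a where a: "\<And>i. (of_nat 2 *s y) $ i = of_int (a i)" by metis
    show "of_nat 2 *s y \<in> M22" by (rule M22_intro[where a=a and m=0 and n=0]) (use a in simp)
  qed simp
next
  fix m :: nat assume m: "0 < m \<and> (\<forall>y\<in>s. of_nat m *s y \<in> M22)"
  show "2 \<le> m"
  proof (rule ccontr)
    assume "\<not> 2 \<le> m"
    then have "m = 1" using m by simp
    obtain y0 where y0: "y0 \<in> M22dual" "s = coset y0" using s Adisc_iff by blast
    then have "y0 \<in> s" using self_coset by simp
    then have "y0 \<in> M22" using m \<open>m = 1\<close> by simp
    then have "coset y0 = coset 0" using coset_eq by simp
    then show False using nz y0 by simp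
  qed
qed

lemma qdisc_val: assumes s: "s \<in> Adisc" and t: "Tc s = t" "1 \<le> t" "t \<le> 6" shows "qdisc s = qv t"
proof -
  obtain y0 where "y0 \<in> M22dual" "s = coset y0" using s Adisc_iff by blast
  then have "y0 \<in> s" using self_coset by simp
  then have zs: "(SOME z. z \<in> s) \<in> s" by (rule someI)
  define z where "z = (SOME z. z \<in> s)"
  have hz': "halfint z" "coset z = s" using mem_Adisc_halfint[OF s] zs z_def by auto
  have tz: "Tw (pat z) = t" using Tc_coset[OF hz'(1)] hz'(2) t by simp
  define a where "a = wt 0 (pat z)"
  define b where "b = wt 1 (pat z)"
  define c where "c = wt 2 (pat z)"
  have le: "a \<le> 4" "b \<le> 4" "c \<le> 4" unfolding a_def b_def c_def using wt_le4 by auto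
  have Ft: "F a b c = t" using tz unfolding Tw_def a_def b_def c_def .
  have m4: "(a + b + c) mod 4 = [0, 0, 2, 0, 2, 3, 1] ! t" using F_mod4[OF le] Ft t by simp
  have "qdisc s = mod2 (bform z z)" unfolding qdisc_def z_def ..
  also have "\<dots> = mod2 (- (of_nat (a + b + c)) / 2)"
    using bform_self[OF hz'(1)] card_split[of "pat z"] unfolding a_def b_def c_def by simp
  also have "\<dots> = [0, 3/2, 1, 1/2] ! ((a + b + c) mod 4)" by (rule mod2_half)
  also have "\<dots> = qv t" unfolding m4 qv_def using t
    by (simp add: le_Suc_eq numeral_eq_Suc) (elim disjE; simp)
  finally show ?thesis .
qed

lemma t16: "t \<in> {1..6::nat} \<longleftrightarrow> t = 1 \<or> t = 2 \<or> t = 3 \<or> t = 4 \<or> t = 5 \<or> t = 6" by auto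

lemma NC: "nontrivial_classes = K ` {1..6}"
proof
  show "nontrivial_classes \<subseteq> K ` {1..6}"
  proof
    fix C assume "C \<in> nontrivial_classes"
    then obtain r where r: "r \<in> Adisc" "r \<noteq> coset 0" and C: "C = disc_class r"
      unfolding nontrivial_classes_def by blast
    have "Tc r \<noteq> 0"
    proof
      assume "Tc r = 0"
      then have "r \<in> K 0" unfolding K_def using r by simp
      then show False using K0 r by simp
    qed
    moreover have "Tc r < 7" using Tc_lt7 r by simp
    ultimately have "Tc r \<in> {1..6}" by auto
    then show "C \<in> K ` {1..6}" using C class_eq[OF r(1)] by simp
  qed
  show "K ` {1..6} \<subseteq> nontrivial_classes"
  proof
    fix C assume "C \<in> K ` {1..6}"
    then obtain t where t: "t \<in> {1..6}" "C = K t" by blast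
    then obtain r where r: "r \<in> K t" using Kt_ne[of t] by auto
    then have rA: "r \<in> Adisc" and rt: "Tc r = t" unfolding K_def by auto
    have "r \<noteq> coset 0" using rt t Tc_zero by auto
    moreover have "disc_class r = C" using class_eq[OF rA] rt t by simp
    ultimately show "C \<in> nontrivial_classes" unfolding nontrivial_classes_def using rA by blast
  qed
qed

lemma K_inj: "inj_on K {1..6}"
proof
  fix t t' assume t: "t \<in> {1..6}" "t' \<in> {1..6}" "K t = K t'"
  then obtain r where "r \<in> K t" using Kt_ne[of t] by auto
  then have "r \<in> K t'" using t by simp
  then show "t = t'" using \<open>r \<in> K t\<close> unfolding K_def by simp
qed

lemma triple_K: assumes t: "t \<in> {1..6}" shows "class_triple (K t) = (2, qv t, cv t)"
proof -
  have ex: "\<exists>r. r \<in> K t" using Kt_ne[of t] t by auto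
  define r where "r = (SOME r. r \<in> K t)"
  have r: "r \<in> K t" unfolding r_def using someI_ex[OF ex] .
  then have rA: "r \<in> Adisc" and rt: "Tc r = t" unfolding K_def by auto
  have "r \<noteq> coset 0" using rt t Tc_zero by auto
  then have "elem_ord r = 2" using elem_ord2 rA by simp
  moreover have "qdisc r = qv t" using qdisc_val[OF rA rt] t by simp
  moreover have "card (K t) = cv t" using card_Kt t by simp
  ultimately show ?thesis unfolding class_triple_def r_def by simp
qed

theorem proposition3p6:
  shows "image_mset class_triple (mset_set nontrivial_classes) =
     {# (2, 0, 54), (2, 0, 1), (2, 1/2, 64), (2, 1, 54), (2, 1, 18), (2, 3/2, 64) #}"
proof -
  have "image_mset class_triple (mset_set nontrivial_classes) = image_mset class_triple (image_mset K (mset_set {1..6}))"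
    unfolding NC image_mset_mset_set[OF K_inj] ..
  also have "\<dots> = image_mset (\<lambda>t. class_triple (K t)) (mset_set {1..6})"
    by (simp add: image_mset.compositionality o_def)
  also have "\<dots> = image_mset (\<lambda>t. (2, qv t, cv t)) (mset_set {1..6})"
    by (rule image_mset_cong) (use triple_K in simp)
  also have "mset_set {1..6::nat} = {#1, 2, 3, 4, 5, 6#}"
  proof -
    have "{1..6::nat} = {1,2,3,4,5,6}" by auto
    then show ?thesis by simp
  qed
  finally show ?thesis by (simp add: qv_def cv_def add_mset_commute)
qed

end
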